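(* Let $X_t\subset X_{t+p}$ be finite simplicial complexes, let $\mathscr{S}_{t+p}$ be a cellular sheaf on $X_{t+p}$ whose stalks are finite-dimensional inner product spaces over $\mathbb{R}$ or $\mathbb{C}$, and let $\mathscr{S}_t$ be its pullback to $X_t$. Suppose each simplex of $X_{t+p}$ is oriented and the simplices of $X_t$ carry the same orientations. Then the spectrum of the persistent sheaf Laplacian $\Delta_q^{t,p}$ does not depend on the choice of orientations of the simplices of $X_{t+p}$ (with $X_t$ always carrying the inherited orientations).
   Context: A cellular sheaf assigns stalks $\mathscr{S}(\sigma)$ to simplices and linear restriction maps $\mathscr{S}_{\sigma\leqslant\tau}$ to face relations, functorially; the pullback $\mathscr{S}_t$ has the same stalks and restriction maps on $X_t$. $C^q(X;\mathscr{S})=\bigoplus_{\dim\sigma=q}\mathscr{S}(\sigma)$, distinct stalks orthogonal; $C^q(X_t;\mathscr{S}_t)$ is the subspace of $C^q(X_{t+p};\mathscr{S}_{t+p})$ spanned by stalks over simplices of $X_t$. The orientation determines signed incidence numbers: for $\tau=[v_0,\dots,v_n]$ and $\sigma=[v_0,\dots,\hat v_i,\dots,v_n]$, $[\sigma:\tau]=(-1)^i$ (or $(-1)^{i+1}$ if $\sigma$ is oppositely oriented), $0$ if $\sigma$ is not a codimension-one face. Coboundary $d_q|_{\mathscr{S}(\sigma)}=\sum_{\sigma\leqslant\tau}[\sigma:\tau]\mathscr{S}_{\sigma\leqslant\tau}$; $d^t,d^{t+p}$ denote those of the two complexes. Let $\mathbb{C}^{t,p}_{q+1}=\{e\in C^{q+1}(X_{t+p};\mathscr{S}_{t+p})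 : (d_q^{t+p})^*(e)\in C^q(X_t;\mathscr{S}_t)\}$, let $\eth_q^{t,p}:C^q(X_t;\mathscr{S}_t)\to\mathbb{C}^{t,p}_{q+1}$ be the adjoint of $(d_q^{t+p})^*|_{\mathbb{C}^{t,p}_{q+1}}$, and define $\Delta_q^{t,p}=(\eth_q^{t,p})^*\eth_q^{t,p}+d_{q-1}^t(d_{q-1}^t)^*$. *)

theory Defs
  imports "Jordan_Normal_Form.Schur_Decomposition"
begin

definition simplicial_complex :: "'v set set \<Rightarrow> bool" where
  "simplicial_complex X \<longleftrightarrow> finite X \<and>
     (\<forall>\<sigma>\<in>X. finite \<sigma> \<and> \<sigma> \<noteq> {}) \<and>
     (\<forall>\<sigma>\<in>X. \<forall>\<rho>. \<rho> \<subseteq> \<sigma> \<longrightarrow> \<rho> \<noteq> {} \<longrightarrow> \<rho> \<in> X)"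

definition cells :: "'v set set \<Rightarrow> nat \<Rightarrow> 'v set set" where
  "cells X q = {\<sigma> \<in> X. card \<sigma> = Suc q}"

text \<open>An orientation of the simplices of X assigns to each simplex an ordering
  [v0,...,vn] of its vertices (an orientation is the class of such orderings
  modulo even permutations; quantifying over all orderings covers all orientations).\<close>
definition orientation :: "'v set set \<Rightarrow> ('v set \<Rightarrow> 'v list) \<Rightarrow> bool" where
  "orientation X ori \<longleftrightarrow> (\<forall>\<sigma>\<in>X. distinct (ori \<sigma>) \<and> set (ori \<sigma>) = \<sigma>)"

definition perm_sign :: "'v list \<Rightarrow> 'v list \<Rightarrow> int" where
  "perm_sign xs ys = (-1) ^ card {(a, b). \<exists>i j. i < j \<and> j < length xs \<and> xs ! i = a \<and> xs ! j = b \<and>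
        (\<exists>k l. k < l \<and> l < length ys \<and> ys ! k = b \<and> ys ! l = a)}"

text \<open>Signed incidence number [sigma : tau]: if tau = [v0,...,vn] (its orientation) and
  sigma = tau minus v_i, it is (-1)^i if sigma is oriented as [v0,...,^vi,...,vn] and
  (-1)^(i+1) if oppositely oriented; 0 if sigma is not a codimension-one face of tau.\<close>
definition incidence :: "('v set \<Rightarrow> 'v list) \<Rightarrow> 'v set \<Rightarrow> 'v set \<Rightarrow> int" where
  "incidence ori \<sigma> \<tau> =
     (if \<sigma> \<subseteq> \<tau> \<and> card \<tau> = Suc (card \<sigma>) then
        (let v = the_elem (\<tau> - \<sigma>); i = length (takeWhile (\<lambda>x. x \<noteq> v) (ori \<tau>))
         in (-1) ^ i * perm_sign (ori \<sigma>) (remove1 v (ori \<tau>)))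
      else 0)"

text \<open>A cellular sheaf with finite-dimensional inner product stalks: the stalk over sigma
  is the coordinate space of dimension sdim sigma with its standard inner product
  (every finite-dimensional inner product space is isometric to such a space),
  and the restriction map for sigma <= tau is the matrix res sigma tau.\<close>
definition cellular_sheaf ::
  "'v set set \<Rightarrow> ('v set \<Rightarrow> nat) \<Rightarrow> ('v set \<Rightarrow> 'v set \<Rightarrow> 'a :: comm_ring_1 mat) \<Rightarrow> bool" where
  "cellular_sheaf X sdim res \<longleftrightarrow>
     (\<forall>\<sigma>\<in>X. \<forall>\<tau>\<in>X. \<sigma> \<subseteq> \<tau> \<longrightarrow> res \<sigma> \<tau> \<in> carrier_mat (sdim \<tau>) (sdim \<sigma>)) \<and>
     (\<forall>\<sigma>\<in>X. res \<sigma> \<sigma> = 1\<^sub>m (sdim \<sigma>)) \<and>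
     (\<forall>\<rho>\<in>X. \<forall>\<sigma>\<in>X. \<forall>\<tau>\<in>X. \<rho> \<subseteq> \<sigma> \<longrightarrow> \<sigma> \<subseteq> \<tau> \<longrightarrow> res \<rho> \<tau> = res \<sigma> \<tau> * res \<rho> \<sigma>)"

definition cell_list :: "'v set set \<Rightarrow> nat \<Rightarrow> 'v set list" where
  "cell_list X q = (SOME xs. distinct xs \<and> set xs = cells X q)"

text \<open>Coordinates of C^q(X; S) = direct sum of stalks over q-simplices, with distinct
  stalks orthogonal: a coordinate is a pair (sigma, i) with i < sdim sigma.\<close>
definition coords :: "('v set \<Rightarrow> nat) \<Rightarrow> 'v set set \<Rightarrow> nat \<Rightarrow> ('v set \<times> nat) list" where
  "coords sdim X q = concat (map (\<lambda>\<sigma>. map (Pair \<sigma>) [0..<sdim \<sigma>]) (cell_list X q))"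

definition cdim :: "('v set \<Rightarrow> nat) \<Rightarrow> 'v set set \<Rightarrow> nat \<Rightarrow> nat" where
  "cdim sdim X q = length (coords sdim X q)"

definition coboundary ::
  "('v set \<Rightarrow> 'v list) \<Rightarrow> ('v set \<Rightarrow> nat) \<Rightarrow> ('v set \<Rightarrow> 'v set \<Rightarrow> 'a :: comm_ring_1 mat) \<Rightarrow>
   'v set set \<Rightarrow> nat \<Rightarrow> 'a mat" where
  "coboundary ori sdim res X q =
     mat (cdim sdim X (Suc q)) (cdim sdim X q)
       (\<lambda>(r, c). (case coords sdim X (Suc q) ! r of (\<tau>, i) \<Rightarrow>
                   case coords sdim X q ! c of (\<sigma>, j) \<Rightarrow>
                     if \<sigma> \<subseteq> \<tau> then of_int (incidence ori \<sigma> \<tau>) * res \<sigma> \<tau> $$ (i, j) else 0))"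

text \<open>Inclusion of C^q(X_t; S_t) into C^q(X_{t+p}; S_{t+p}) as the subspace spanned by the
  stalks over simplices of X_t (in coordinates).\<close>
definition inclusion ::
  "('v set \<Rightarrow> nat) \<Rightarrow> 'v set set \<Rightarrow> 'v set set \<Rightarrow> nat \<Rightarrow> 'a :: comm_ring_1 mat" where
  "inclusion sdim K L q =
     mat (cdim sdim L q) (cdim sdim K q)
       (\<lambda>(r, c). if coords sdim L q ! r = coords sdim K q ! c then 1 else 0)"

text \<open>The set C^{t,p}_{q+1} of (q+1)-cochains e on X_{t+p} with (d_q^{t+p})^* e in C^q(X_t).\<close>
definition pers_space ::
  "('v set \<Rightarrow> 'v list) \<Rightarrow> ('v set \<Rightarrow> nat) \<Rightarrow> ('v set \<Rightarrow> 'v set \<Rightarrow> 'a :: conjugatable_field mat) \<Rightarrow>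
   'v set set \<Rightarrow> 'v set set \<Rightarrow> nat \<Rightarrow> 'a vec set" where
  "pers_space ori sdim res K L q =
     {e \<in> carrier_vec (cdim sdim L (Suc q)).
        \<exists>x \<in> carrier_vec (cdim sdim K q).
          mat_adjoint (coboundary ori sdim res L q) *\<^sub>v e = inclusion sdim K L q *\<^sub>v x}"

text \<open>(d_q^{t+p})^* restricted to C^{t,p}_{q+1}, as a map into C^q(X_t) (K-coordinates).\<close>
definition pers_down ::
  "('v set \<Rightarrow> 'v list) \<Rightarrow> ('v set \<Rightarrow> nat) \<Rightarrow> ('v set \<Rightarrow> 'v set \<Rightarrow> 'a :: conjugatable_field mat) \<Rightarrow>
   'v set set \<Rightarrow> 'v set set \<Rightarrow> nat \<Rightarrow> 'a vec \<Rightarrow> 'a vec" where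
  "pers_down ori sdim res K L q e =
     (THE x. x \<in> carrier_vec (cdim sdim K q) \<and>
        mat_adjoint (coboundary ori sdim res L q) *\<^sub>v e = inclusion sdim K L q *\<^sub>v x)"

text \<open>eth_q^{t,p} : C^q(X_t) \<rightarrow> C^{t,p}_{q+1}, the adjoint of pers_down.\<close>
definition eth ::
  "('v set \<Rightarrow> 'v list) \<Rightarrow> ('v set \<Rightarrow> nat) \<Rightarrow> ('v set \<Rightarrow> 'v set \<Rightarrow> 'a :: conjugatable_field mat) \<Rightarrow>
   'v set set \<Rightarrow> 'v set set \<Rightarrow> nat \<Rightarrow> 'a vec \<Rightarrow> 'a vec" where
  "eth ori sdim res K L q x =
     (THE y. y \<in> pers_space ori sdim res K L q \<and>
        (\<forall>e \<in> pers_space ori sdim res K L q. y \<bullet>c e = x \<bullet>c pers_down ori sdim res K L q e))"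

definition eth_adj ::
  "('v set \<Rightarrow> 'v list) \<Rightarrow> ('v set \<Rightarrow> nat) \<Rightarrow> ('v set \<Rightarrow> 'v set \<Rightarrow> 'a :: conjugatable_field mat) \<Rightarrow>
   'v set set \<Rightarrow> 'v set set \<Rightarrow> nat \<Rightarrow> 'a vec \<Rightarrow> 'a vec" where
  "eth_adj ori sdim res K L q e =
     (THE z. z \<in> carrier_vec (cdim sdim K q) \<and>
        (\<forall>x \<in> carrier_vec (cdim sdim K q). z \<bullet>c x = e \<bullet>c eth ori sdim res K L q x))"

text \<open>Down part d_{q-1}^t (d_{q-1}^t)^*, which is 0 for q = 0 (C^{-1} = 0).\<close>
definition down_laplacian ::
  "('v set \<Rightarrow> 'v list) \<Rightarrow> ('v set \<Rightarrow> nat) \<Rightarrow> ('v set \<Rightarrow> 'v set \<Rightarrow> 'a :: conjugatable_field mat) \<Rightarrow>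
   'v set set \<Rightarrow> nat \<Rightarrow> 'a mat" where
  "down_laplacian ori sdim res K q =
     (if q = 0 then 0\<^sub>m (cdim sdim K 0) (cdim sdim K 0)
      else coboundary ori sdim res K (q - 1) * mat_adjoint (coboundary ori sdim res K (q - 1)))"

definition pers_laplacian ::
  "('v set \<Rightarrow> 'v list) \<Rightarrow> ('v set \<Rightarrow> nat) \<Rightarrow> ('v set \<Rightarrow> 'v set \<Rightarrow> 'a :: conjugatable_field mat) \<Rightarrow>
   'v set set \<Rightarrow> 'v set set \<Rightarrow> nat \<Rightarrow> 'a mat" where
  "pers_laplacian ori sdim res K L q =
     mat (cdim sdim K q) (cdim sdim K q)
       (\<lambda>(i, j). (eth_adj ori sdim res K L q (eth ori sdim res K L q (unit_vec (cdim sdim K q) j))) $ i)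
     + down_laplacian ori sdim res K q"

text \<open>Spectrum of a square matrix, with (algebraic) multiplicities: the multiset of roots
  of its characteristic polynomial.\<close>
definition spectrum_mset :: "'a :: field mat \<Rightarrow> 'a multiset" where
  "spectrum_mset A = proots (char_poly A)"

end

theory Submission
  imports Defs
begin



lemma conjugate_one_cf[simp]: "conjugate (1 :: 'a :: conjugatable_field) = 1"
proof -
  have "conjugate (1 :: 'a) = conjugate 1 * conjugate (conjugate (1::'a))" by simp
  also have "\<dots> = conjugate (1 * conjugate 1)" by (simp only: conjugate_dist_mul)
  also have "\<dots> = 1" by simp
  finally show ?thesis .
qed

lemma cip_sum: "v \<bullet>c w = (\<Sum>i\<in>{0..<dim_vec w}. v $ i * conjugate (w $ i))"
  unfolding scalar_prod_def conjugate_vec_def by simp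

context
  fixes n :: nat
begin

lemma cip_add_left:
  fixes a b c :: "'a :: conjugatable_field vec"
  assumes "a \<in> carrier_vec n" "b \<in> carrier_vec n" "c \<in> carrier_vec n"
  shows "(a + b) \<bullet>c c = a \<bullet>c c + b \<bullet>c c"
proof -
  have "(\<Sum>i\<in>{0..<dim_vec c}. (a + b) $ i * conjugate (c $ i)) =
     (\<Sum>i\<in>{0..<dim_vec c}. a $ i * conjugate (c $ i) + b $ i * conjugate (c $ i))"
    using assms by (intro sum.cong refl) (simp add: distrib_right)
  then show ?thesis unfolding cip_sum by (simp add: sum.distrib)
qed

lemma cip_add_right:
  fixes a b c :: "'a :: conjugatable_field vec"
  assumes "a \<in> carrier_vec n" "b \<in> carrier_vec n" "c \<in> carrier_vec n"
  shows "a \<bullet>c (b + c) = a \<bullet>c b + a \<bullet>c c"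
proof -
  have "(\<Sum>i\<in>{0..<dim_vec (b + c)}. a $ i * conjugate ((b + c) $ i)) =
     (\<Sum>i\<in>{0..<dim_vec b}. a $ i * conjugate (b $ i) + a $ i * conjugate (c $ i))"
    using assms by (intro sum.cong) (simp_all add: distrib_left conjugate_dist_add)
  then show ?thesis using assms unfolding cip_sum by (simp add: sum.distrib)
qed

lemma cip_minus_left:
  fixes a b c :: "'a :: conjugatable_field vec"
  assumes "a \<in> carrier_vec n" "b \<in> carrier_vec n" "c \<in> carrier_vec n"
  shows "(a - b) \<bullet>c c = a \<bullet>c c - b \<bullet>c c"
proof -
  have "(\<Sum>i\<in>{0..<dim_vec c}. (a - b) $ i * conjugate (c $ i)) =
     (\<Sum>i\<in>{0..<dim_vec c}. a $ i * conjugate (c $ i) - b $ i * conjugate (c $ i))"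
    using assms by (intro sum.cong refl) (simp add: left_diff_distrib)
  then show ?thesis unfolding cip_sum by (simp add: sum_subtractf)
qed

lemma cip_minus_right:
  fixes a b c :: "'a :: conjugatable_field vec"
  assumes "a \<in> carrier_vec n" "b \<in> carrier_vec n" "c \<in> carrier_vec n"
  shows "a \<bullet>c (b - c) = a \<bullet>c b - a \<bullet>c c"
proof -
  have "conjugate (x - y) = conjugate x - conjugate (y::'a)" for x y
    by (metis conjugate_dist_add conjugate_neg diff_conv_add_uminus)
  then have "(\<Sum>i\<in>{0..<dim_vec (b - c)}. a $ i * conjugate ((b - c) $ i)) =
     (\<Sum>i\<in>{0..<dim_vec b}. a $ i * conjugate (b $ i) - a $ i * conjugate (c $ i))"
    using assms by (intro sum.cong) (simp_all add: right_diff_distrib)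
  then show ?thesis using assms unfolding cip_sum by (simp add: sum_subtractf)
qed

lemma cip_smult_left:
  fixes a b :: "'a :: conjugatable_field vec"
  assumes "a \<in> carrier_vec n" "b \<in> carrier_vec n"
  shows "(k \<cdot>\<^sub>v a) \<bullet>c b = k * (a \<bullet>c b)"
  using assms unfolding cip_sum sum_distrib_left by (intro sum.cong refl) (simp add: mult.assoc)

lemma cip_smult_right:
  fixes a b :: "'a :: conjugatable_field vec"
  assumes "a \<in> carrier_vec n" "b \<in> carrier_vec n"
  shows "a \<bullet>c (k \<cdot>\<^sub>v b) = conjugate k * (a \<bullet>c b)"
  using assms unfolding cip_sum sum_distrib_left by (intro sum.cong) (simp_all add: conjugate_dist_mul ac_simps)

lemma cip_conj:
  fixes a b :: "'a :: conjugatable_field vec"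
  assumes "a \<in> carrier_vec n" "b \<in> carrier_vec n"
  shows "b \<bullet>c a = conjugate (a \<bullet>c b)"
proof -
  have "conjugate (a \<bullet>c b) = (\<Sum>i\<in>{0..<dim_vec b}. conjugate (a $ i * conjugate (b $ i)))"
    unfolding cip_sum by (rule sum_conjugate) simp
  also have "\<dots> = (\<Sum>i\<in>{0..<dim_vec a}. b $ i * conjugate (a $ i))"
    using assms by (intro sum.cong) (auto simp only: conjugate_dist_mul conjugate_id mult.commute carrier_vecD)
  finally show ?thesis unfolding cip_sum by simp
qed

lemma cip_zero_right:
  fixes a :: "'a :: conjugatable_field vec"
  assumes "a \<in> carrier_vec n"
  shows "a \<bullet>c 0\<^sub>v n = 0"
  using assms unfolding cip_sum by auto

lemma cip_zero_left:
  fixes a :: "'a :: conjugatable_field vec"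
  assumes "a \<in> carrier_vec n"
  shows "0\<^sub>v n \<bullet>c a = 0"
  using assms unfolding cip_sum by auto

lemma cip_self_zero:
  fixes a :: "'a :: conjugatable_ordered_field vec"
  assumes "a \<in> carrier_vec n" "a \<bullet>c a = 0"
  shows "a = 0\<^sub>v n"
  using conjugate_square_eq_0_vec[OF assms(1)] assms(2) by simp

end

definition subsp :: "nat \<Rightarrow> 'a :: conjugatable_field vec set \<Rightarrow> bool" where
  "subsp n W \<longleftrightarrow> W \<subseteq> carrier_vec n \<and> 0\<^sub>v n \<in> W \<and> (\<forall>a\<in>W. \<forall>b\<in>W. a + b \<in> W)
     \<and> (\<forall>k. \<forall>a\<in>W. k \<cdot>\<^sub>v a \<in> W)"

lemma minus_as_smult:
  fixes a b :: "'a :: conjugatable_field vec"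
  assumes "a \<in> carrier_vec n" "b \<in> carrier_vec n"
  shows "a - b = a + (-1) \<cdot>\<^sub>v b"
  using assms by (intro eq_vecI) auto

lemma subsp_minus: "subsp n W \<Longrightarrow> a \<in> W \<Longrightarrow> b \<in> W \<Longrightarrow> a - b \<in> W"
  unfolding subsp_def by (subst minus_as_smult[of a n b]) auto

lemma riesz_aux:
  fixes W :: "'a :: conjugatable_ordered_field vec set"
  assumes "subsp n W" "\<forall>w\<in>W. \<forall>i. k \<le> i \<longrightarrow> i < n \<longrightarrow> w $ i = 0" "v \<in> carrier_vec n"
  shows "\<exists>y\<in>W. \<forall>e\<in>W. y \<bullet>c e = v \<bullet>c e"
  using assms
proof (induction k arbitrary: W v)
  case 0
  have Wc: "W \<subseteq> carrier_vec n" using 0 unfolding subsp_def by auto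
  have z: "w = 0\<^sub>v n" if "w \<in> W" for w
    using that Wc 0(2) by (intro eq_vecI) auto
  show ?case
  proof (intro bexI[of _ "0\<^sub>v n"] ballI)
    fix e assume "e \<in> W"
    then have "e = 0\<^sub>v n" by (rule z)
    then show "0\<^sub>v n \<bullet>c e = v \<bullet>c e" using cip_zero_left[of "0\<^sub>v n" n] cip_zero_right[OF 0(3)] by simp
  next
    show "0\<^sub>v n \<in> W" using 0(1) unfolding subsp_def by auto
  qed
next
  case (Suc k)
  have Wc: "W \<subseteq> carrier_vec n" using Suc unfolding subsp_def by auto
  show ?case
  proof (cases "n \<le> k \<or> (\<forall>w\<in>W. w $ k = 0)")
    case True
    have "\<forall>w\<in>W. \<forall>i. k \<le> i \<longrightarrow> i < n \<longrightarrow> w $ i = 0"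
    proof (intro ballI allI impI)
      fix w i assume "w \<in> W" "k \<le> i" "i < n"
      then show "w $ i = 0" using True Suc(3) by (cases "i = k") auto
    qed
    then show ?thesis using Suc by blast
  next
    case False
    then have kn: "k < n" by auto
    from False obtain w0 where w0: "w0 \<in> W" "w0 $ k \<noteq> 0" by auto
    define W' where "W' = {w \<in> W. w $ k = 0}"
    have sub': "subsp n W'"
      using Suc(2) kn Wc unfolding subsp_def W'_def by (auto simp: subset_iff)
    have z': "\<forall>w\<in>W'. \<forall>i. k \<le> i \<longrightarrow> i < n \<longrightarrow> w $ i = 0"
    proof (intro ballI allI impI)
      fix w i assume "w \<in> W'" "k \<le> i" "i < n"
      then show "w $ i = 0" using Suc(3) unfolding W'_def by (cases "i = k") auto
    qed
    have W'W: "W' \<subseteq> W" unfolding W'_def by auto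
    have w0c: "w0 \<in> carrier_vec n" using w0 Wc by auto
    obtain p0 where p0: "p0 \<in> W'" "\<forall>e\<in>W'. p0 \<bullet>c e = w0 \<bullet>c e"
      using Suc.IH[OF sub' z' w0c] by blast
    obtain pv where pv: "pv \<in> W'" "\<forall>e\<in>W'. pv \<bullet>c e = v \<bullet>c e"
      using Suc.IH[OF sub' z' Suc(4)] by blast
    have p0c: "p0 \<in> carrier_vec n" and pvc: "pv \<in> carrier_vec n" using p0 pv W'W Wc by auto
    define u where "u = w0 - p0"
    have uW: "u \<in> W" unfolding u_def using subsp_minus[OF Suc(2) w0(1)] p0 W'W by auto
    have uc: "u \<in> carrier_vec n" using uW Wc by auto
    have uk: "u $ k \<noteq> 0" using w0 p0 kn w0c p0c unfolding u_def W'_def by auto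
    have uu: "u \<bullet>c u \<noteq> 0"
    proof
      assume "u \<bullet>c u = 0"
      then have "u = 0\<^sub>v n" using cip_self_zero[OF uc] by auto
      then show False using uk kn by auto
    qed
    have uorth: "u \<bullet>c e = 0" if "e \<in> W'" for e
    proof -
      have ec: "e \<in> carrier_vec n" using that W'W Wc by auto
      show ?thesis unfolding u_def using cip_minus_left[OF w0c p0c ec] p0(2) that by simp
    qed
    define \<alpha> where "\<alpha> = (v \<bullet>c u) / (u \<bullet>c u)"
    define y where "y = pv + \<alpha> \<cdot>\<^sub>v u"
    have yW: "y \<in> W" unfolding y_def using Suc(2) pv(1) W'W uW unfolding subsp_def by auto
    have yc: "y \<in> carrier_vec n" using yW Wc by auto
    have yu: "y \<bullet>c u = v \<bullet>c u"
    proof -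
      have "pv \<bullet>c u = conjugate (u \<bullet>c pv)" using cip_conj[OF uc pvc] .
      also have "\<dots> = 0" using uorth[OF pv(1)] by simp
      finally have "pv \<bullet>c u = 0" .
      then show ?thesis unfolding y_def \<alpha>_def
        using cip_add_left[OF pvc _ uc, of "\<alpha> \<cdot>\<^sub>v u"] cip_smult_left[OF uc uc] uc uu
        by (simp add: \<alpha>_def)
    qed
    have ye': "y \<bullet>c e = v \<bullet>c e" if "e \<in> W'" for e
    proof -
      have ec: "e \<in> carrier_vec n" using that W'W Wc by auto
      show ?thesis unfolding y_def
        using cip_add_left[OF pvc _ ec, of "\<alpha> \<cdot>\<^sub>v u"] cip_smult_left[OF uc ec] uc uorth[OF that] pv(2) that
        by simp
    qed
    show ?thesis
    proof (intro bexI[OF _ yW] ballI)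
      fix e assume eW: "e \<in> W"
      have ec: "e \<in> carrier_vec n" using eW Wc by auto
      define c where "c = e $ k / u $ k"
      define e' where "e' = e - c \<cdot>\<^sub>v u"
      have e'W: "e' \<in> W'"
      proof -
        have "e' \<in> W" unfolding e'_def using subsp_minus[OF Suc(2) eW] Suc(2) uW unfolding subsp_def by auto
        moreover have "e' $ k = 0" unfolding e'_def c_def using kn ec uc uk by auto
        ultimately show ?thesis unfolding W'_def by auto
      qed
      have e'c: "e' \<in> carrier_vec n" using e'W W'W Wc by auto
      have ee: "e = e' + c \<cdot>\<^sub>v u" unfolding e'_def using ec uc by (intro eq_vecI) auto
      have "y \<bullet>c e = y \<bullet>c e' + conjugate c * (y \<bullet>c u)"
        unfolding ee using cip_add_right[OF yc e'c, of "c \<cdot>\<^sub>v u"] cip_smult_right[OF yc uc] uc by simp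
      also have "\<dots> = v \<bullet>c e' + conjugate c * (v \<bullet>c u)" using ye'[OF e'W] yu by simp
      also have "\<dots> = v \<bullet>c e"
        unfolding ee using cip_add_right[OF Suc(4) e'c, of "c \<cdot>\<^sub>v u"] cip_smult_right[OF Suc(4) uc] uc by simp
      finally show "y \<bullet>c e = v \<bullet>c e" .
    qed
  qed
qed

lemma riesz:
  fixes W :: "'a :: conjugatable_ordered_field vec set"
  assumes "subsp n W" "v \<in> carrier_vec n"
  shows "\<exists>!y. y \<in> W \<and> (\<forall>e\<in>W. y \<bullet>c e = v \<bullet>c e)"
proof -
  obtain y where y: "y \<in> W" "\<forall>e\<in>W. y \<bullet>c e = v \<bullet>c e" using riesz_aux[OF assms(1) _ assms(2), of n] by auto
  have Wc: "W \<subseteq> carrier_vec n" using assms unfolding subsp_def by auto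
  { fix y' assume y': "y' \<in> W" "\<forall>e\<in>W. y' \<bullet>c e = v \<bullet>c e"
    define d where "d = y' - y"
    have dW: "d \<in> W" unfolding d_def using subsp_minus[OF assms(1) y'(1) y(1)] .
    have c: "y \<in> carrier_vec n" "y' \<in> carrier_vec n" "d \<in> carrier_vec n" using y y' dW Wc by auto
    have "d \<bullet>c d = 0" unfolding d_def using cip_minus_left[OF c(2) c(1) c(3)] y'(2) y(2) dW
      unfolding d_def by simp
    then have "d = 0\<^sub>v n" using cip_self_zero[OF c(3)] by simp
    have "y' = y"
    proof (rule eq_vecI)
      fix i assume i: "i < dim_vec y"
      have "d $ i = 0" using \<open>d = 0\<^sub>v n\<close> i c by simp
      then show "y' $ i = y $ i" unfolding d_def using i c by simp
    qed (use c in simp)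
  }
  then show ?thesis using y by blast
qed




lemma adj_dim[simp]: "dim_row (mat_adjoint A) = dim_col A" "dim_col (mat_adjoint A) = dim_row A"
  unfolding mat_adjoint_def mat_of_rows_def by auto

lemma adj_index[simp]: "i < dim_col A \<Longrightarrow> j < dim_row A \<Longrightarrow> mat_adjoint A $$ (i, j) = conjugate (A $$ (j, i))"
  unfolding mat_adjoint_def mat_of_rows_def by (simp add: conjugate_vec_def)

lemma adj_carrier: "A \<in> carrier_mat n m \<Longrightarrow> mat_adjoint A \<in> carrier_mat m n"
  by (intro carrier_matI) (simp_all add: carrier_matD)

lemma mult_vec_zero: "A \<in> carrier_mat n m \<Longrightarrow> A *\<^sub>v 0\<^sub>v m = 0\<^sub>v n"
  by (intro eq_vecI) auto

lemma adj_identity: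
  fixes A :: "'a :: conjugatable_field mat"
  assumes A: "A \<in> carrier_mat n m" and v: "v \<in> carrier_vec m" and w: "w \<in> carrier_vec n"
  shows "(A *\<^sub>v v) \<bullet>c w = v \<bullet>c (mat_adjoint A *\<^sub>v w)"
proof -
  have "(A *\<^sub>v v) \<bullet>c w = (\<Sum>i\<in>{0..<n}. (\<Sum>j\<in>{0..<m}. A $$ (i, j) * v $ j) * conjugate (w $ i))"
    unfolding cip_sum using A v w by (intro sum.cong) (auto simp: scalar_prod_def)
  also have "\<dots> = (\<Sum>i\<in>{0..<n}. \<Sum>j\<in>{0..<m}. v $ j * (A $$ (i, j) * conjugate (w $ i)))"
    unfolding sum_distrib_right by (intro sum.cong refl) (simp add: ac_simps)
  also have "\<dots> = (\<Sum>j\<in>{0..<m}. \<Sum>i\<in>{0..<n}. v $ j * (A $$ (i, j) * conjugate (w $ i)))"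
    by (rule sum.swap)
  also have "\<dots> = (\<Sum>j\<in>{0..<m}. v $ j * conjugate (\<Sum>i\<in>{0..<n}. conjugate (A $$ (i, j)) * w $ i))"
    by (simp add: sum_conjugate conjugate_dist_mul sum_distrib_left)
  also have "\<dots> = v \<bullet>c (mat_adjoint A *\<^sub>v w)"
    unfolding cip_sum using A v w by (intro sum.cong) (auto simp: scalar_prod_def)
  finally show ?thesis .
qed

lemma adj_mult:
  fixes A :: "'a :: conjugatable_field mat"
  assumes A: "A \<in> carrier_mat n k" and B: "B \<in> carrier_mat k m"
  shows "mat_adjoint (A * B) = mat_adjoint B * mat_adjoint A"
proof (rule eq_matI)
  fix i j assume i: "i < dim_row (mat_adjoint B * mat_adjoint A)" and j: "j < dim_col (mat_adjoint B * mat_adjoint A)"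
  then have i': "i < m" and j': "j < n" using A B by auto
  have "mat_adjoint (A * B) $$ (i, j) = conjugate (\<Sum>l\<in>{0..<k}. A $$ (j, l) * B $$ (l, i))"
    using A B i' j' by (simp add: scalar_prod_def)
  also have "\<dots> = (\<Sum>l\<in>{0..<k}. conjugate (B $$ (l, i)) * conjugate (A $$ (j, l)))"
    by (simp add: sum_conjugate conjugate_dist_mul mult.commute)
  also have "\<dots> = (mat_adjoint B * mat_adjoint A) $$ (i, j)"
    using A B i' j' by (simp add: scalar_prod_def)
  finally show "mat_adjoint (A * B) $$ (i, j) = (mat_adjoint B * mat_adjoint A) $$ (i, j)" .
qed (use A B in auto)

lemma sum_if_eq_l: "i < (n::nat) \<Longrightarrow> (\<Sum>ia\<in>{0..<n}. (if i = ia then c else 0) * f ia) = c * (f i :: 'a :: semiring_0)"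
proof -
  assume i: "i < n"
  have "(\<Sum>ia\<in>{0..<n}. (if i = ia then c else 0) * f ia) = (\<Sum>ia\<in>{0..<n}. if i = ia then c * f ia else 0)"
    by (rule sum.cong) auto
  also have "\<dots> = c * f i" using i by (simp add: sum.delta sum.delta')
  finally show ?thesis .
qed

lemma sum_if_eq_r: "j < (n::nat) \<Longrightarrow> (\<Sum>ia\<in>{0..<n}. f ia * (if ia = j then c ia else 0)) = f j * (c j :: 'a :: semiring_0)"
proof -
  assume j: "j < n"
  have "(\<Sum>ia\<in>{0..<n}. f ia * (if ia = j then c ia else 0)) = (\<Sum>ia\<in>{0..<n}. if j = ia then f j * c j else 0)"
    by (rule sum.cong) auto
  also have "\<dots> = f j * c j" using j by (simp add: sum.delta sum.delta')
  finally show ?thesis .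
qed

definition Dm :: "nat \<Rightarrow> (nat \<Rightarrow> 'a :: conjugatable_field) \<Rightarrow> 'a mat" where
  "Dm n d = mat n n (\<lambda>(i, j). if i = j then d i else 0)"

definition sgnf :: "nat \<Rightarrow> (nat \<Rightarrow> 'a :: conjugatable_field) \<Rightarrow> bool" where
  "sgnf n d \<longleftrightarrow> (\<forall>i<n. d i * d i = 1 \<and> conjugate (d i) = d i)"

lemma Dm_carrier[simp]: "Dm n d \<in> carrier_mat n n"
  unfolding Dm_def by auto

lemma Dm_dim[simp]: "dim_row (Dm n d) = n" "dim_col (Dm n d) = n"
  unfolding Dm_def by auto

lemma Dm_mult_vec:
  assumes "v \<in> carrier_vec n"
  shows "Dm n d *\<^sub>v v = vec n (\<lambda>i. d i * v $ i)"
proof (rule eq_vecI)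
  fix i assume "i < dim_vec (vec n (\<lambda>i. d i * v $ i))"
  then have i: "i < n" by simp
  have "(Dm n d *\<^sub>v v) $ i = d i * v $ i"
    using i assms unfolding Dm_def by (simp add: scalar_prod_def sum_if_eq_l)
  then show "(Dm n d *\<^sub>v v) $ i = vec n (\<lambda>i. d i * v $ i) $ i" using i by simp
qed simp

lemma Dm_mult_left:
  assumes "A \<in> carrier_mat n m"
  shows "Dm n d * A = mat n m (\<lambda>(i, j). d i * A $$ (i, j))"
proof (rule eq_matI)
  fix i j assume ij: "i < dim_row (mat n m (\<lambda>(i, j). d i * A $$ (i, j)))" "j < dim_col (mat n m (\<lambda>(i, j). d i * A $$ (i, j)))"
  then have i: "i < n" and j: "j < m" by auto
  have "(Dm n d * A) $$ (i, j) = d i * A $$ (i, j)"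
    using i j assms unfolding Dm_def by (simp add: scalar_prod_def sum_if_eq_l)
  then show "(Dm n d * A) $$ (i, j) = mat n m (\<lambda>(i, j). d i * A $$ (i, j)) $$ (i, j)" using i j by simp
qed (use assms in auto)

lemma Dm_mult_right:
  assumes "A \<in> carrier_mat n m"
  shows "A * Dm m d = mat n m (\<lambda>(i, j). A $$ (i, j) * d j)"
proof (rule eq_matI)
  fix i j assume ij: "i < dim_row (mat n m (\<lambda>(i, j). A $$ (i, j) * d j))" "j < dim_col (mat n m (\<lambda>(i, j). A $$ (i, j) * d j))"
  then have i: "i < n" and j: "j < m" by auto
  have "(A * Dm m d) $$ (i, j) = A $$ (i, j) * d j"
    using i j assms unfolding Dm_def by (simp add: scalar_prod_def sum_if_eq_r)
  then show "(A * Dm m d) $$ (i, j) = mat n m (\<lambda>(i, j). A $$ (i, j) * d j) $$ (i, j)" using i j by simp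
qed (use assms in auto)

lemma Dm_sq: "sgnf n d \<Longrightarrow> Dm n d * Dm n d = 1\<^sub>m n"
  unfolding Dm_mult_left[OF Dm_carrier] sgnf_def by (intro eq_matI) (auto simp: Dm_def)

lemma Dm_adj: "sgnf n d \<Longrightarrow> mat_adjoint (Dm n d) = Dm n d"
  unfolding sgnf_def by (intro eq_matI) (auto simp: Dm_def)

lemma Dm_Dm_vec: "sgnf n d \<Longrightarrow> v \<in> carrier_vec n \<Longrightarrow> Dm n d *\<^sub>v (Dm n d *\<^sub>v v) = v"
  by (subst assoc_mult_mat_vec[symmetric, of _ n n _ n]) (auto simp: Dm_sq)

lemma Dm_ip:
  assumes "sgnf n d" "a \<in> carrier_vec n" "b \<in> carrier_vec n"
  shows "(Dm n d *\<^sub>v a) \<bullet>c (Dm n d *\<^sub>v b) = a \<bullet>c b"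
proof -
  have "(Dm n d *\<^sub>v a) \<bullet>c (Dm n d *\<^sub>v b) = (\<Sum>i\<in>{0..<n}. (d i * a $ i) * conjugate (d i * b $ i))"
    unfolding cip_sum Dm_mult_vec[OF assms(2)] Dm_mult_vec[OF assms(3)] by simp
  also have "\<dots> = (\<Sum>i\<in>{0..<n}. (d i * d i) * (a $ i * conjugate (b $ i)))"
    using assms(1) unfolding sgnf_def by (intro sum.cong) (auto simp: conjugate_dist_mul ac_simps)
  also have "\<dots> = a \<bullet>c b" unfolding cip_sum using assms unfolding sgnf_def by (intro sum.cong) auto
  finally show ?thesis .
qed

definition PS :: "'a :: conjugatable_field mat \<Rightarrow> 'a mat \<Rightarrow> nat \<Rightarrow> nat \<Rightarrow> 'a vec set" where
  "PS A I n m = {e \<in> carrier_vec n. \<exists>x \<in> carrier_vec m. mat_adjoint A *\<^sub>v e = I *\<^sub>v x}"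

definition PD :: "'a :: conjugatable_field mat \<Rightarrow> 'a mat \<Rightarrow> nat \<Rightarrow> 'a vec \<Rightarrow> 'a vec" where
  "PD A I m e = (THE x. x \<in> carrier_vec m \<and> mat_adjoint A *\<^sub>v e = I *\<^sub>v x)"

definition ETH :: "'a :: conjugatable_field mat \<Rightarrow> 'a mat \<Rightarrow> nat \<Rightarrow> nat \<Rightarrow> 'a vec \<Rightarrow> 'a vec" where
  "ETH A I n m x = (THE y. y \<in> PS A I n m \<and> (\<forall>e \<in> PS A I n m. y \<bullet>c e = x \<bullet>c PD A I m e))"

definition EA :: "'a :: conjugatable_field mat \<Rightarrow> 'a mat \<Rightarrow> nat \<Rightarrow> nat \<Rightarrow> 'a vec \<Rightarrow> 'a vec" where
  "EA A I n m e = (THE z. z \<in> carrier_vec m \<and> (\<forall>x \<in> carrier_vec m. z \<bullet>c x = e \<bullet>c ETH A I n m x))"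

definition LAP :: "'a :: conjugatable_field mat \<Rightarrow> 'a mat \<Rightarrow> nat \<Rightarrow> nat \<Rightarrow> 'a mat" where
  "LAP A I n m = mat m m (\<lambda>(i, j). EA A I n m (ETH A I n m (unit_vec m j)) $ i)"

definition proj :: "'a :: conjugatable_field mat \<Rightarrow> 'a mat \<Rightarrow> nat \<Rightarrow> nat \<Rightarrow> 'a vec \<Rightarrow> 'a vec" where
  "proj A I n m v = (THE y. y \<in> PS A I n m \<and> (\<forall>e \<in> PS A I n m. y \<bullet>c e = v \<bullet>c e))"

lemma pers_lap_LAP:
  "pers_laplacian ori sdim res K L q =
    LAP (coboundary ori sdim res L q) (inclusion sdim K L q) (cdim sdim L (Suc q)) (cdim sdim K q)
    + down_laplacian ori sdim res K q"
  unfolding pers_laplacian_def LAP_def EA_def ETH_def PD_def PS_def eth_adj_def eth_def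
    pers_down_def pers_space_def ..

locale lapset =
  fixes A :: "'a :: conjugatable_ordered_field mat" and I :: "'a mat" and n' n m :: nat
  assumes A: "A \<in> carrier_mat n' n" and I: "I \<in> carrier_mat n m"
    and II: "mat_adjoint I * I = 1\<^sub>m m"
begin

abbreviation "W \<equiv> PS A I n' m"

lemma AH: "mat_adjoint A \<in> carrier_mat n n'" using adj_carrier[OF A] .
lemma IH: "mat_adjoint I \<in> carrier_mat m n" using adj_carrier[OF I] .

lemma W_carrier: "e \<in> W \<Longrightarrow> e \<in> carrier_vec n'" unfolding PS_def by auto

lemma subsp_W: "subsp n' W"
  unfolding subsp_def
proof (intro conjI ballI allI)
  show "W \<subseteq> carrier_vec n'" unfolding PS_def by auto
  show "0\<^sub>v n' \<in> W" unfolding PS_def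
    using mult_vec_zero[OF AH] mult_vec_zero[OF I] by (auto intro!: bexI[of _ "0\<^sub>v m"])
  fix a b assume a: "a \<in> W" and b: "b \<in> W"
  from a obtain x where x: "x \<in> carrier_vec m" "mat_adjoint A *\<^sub>v a = I *\<^sub>v x" unfolding PS_def by auto
  from b obtain y where y: "y \<in> carrier_vec m" "mat_adjoint A *\<^sub>v b = I *\<^sub>v y" unfolding PS_def by auto
  have "mat_adjoint A *\<^sub>v (a + b) = I *\<^sub>v (x + y)"
    using mult_add_distrib_mat_vec[OF AH W_carrier[OF a] W_carrier[OF b]] mult_add_distrib_mat_vec[OF I x(1) y(1)] x y
    by simp
  then show "a + b \<in> W" using a b x y unfolding PS_def by auto
next
  fix k a assume a: "a \<in> W"
  from a obtain x where x: "x \<in> carrier_vec m" "mat_adjoint A *\<^sub>v a = I *\<^sub>v x" unfolding PS_def by auto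
  have "mat_adjoint A *\<^sub>v (k \<cdot>\<^sub>v a) = I *\<^sub>v (k \<cdot>\<^sub>v x)"
    using mult_mat_vec[OF AH W_carrier[OF a]] mult_mat_vec[OF I x(1)] x by simp
  then show "k \<cdot>\<^sub>v a \<in> W" using a x unfolding PS_def by auto
qed

lemma proj:
  assumes "v \<in> carrier_vec n'"
  shows "proj A I n' m v \<in> W" "\<forall>e\<in>W. proj A I n' m v \<bullet>c e = v \<bullet>c e"
  using theI'[OF riesz[OF subsp_W assms]] unfolding proj_def by auto

lemma proj_unique:
  assumes "v \<in> carrier_vec n'" "y \<in> W" "\<forall>e\<in>W. y \<bullet>c e = v \<bullet>c e"
  shows "proj A I n' m v = y"
  unfolding proj_def using the1_equality[OF riesz[OF subsp_W assms(1)]] assms by auto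

lemma proj_carrier: "v \<in> carrier_vec n' \<Longrightarrow> proj A I n' m v \<in> carrier_vec n'"
  using proj(1) W_carrier by blast

lemma proj_smult:
  assumes v: "v \<in> carrier_vec n'"
  shows "proj A I n' m (c \<cdot>\<^sub>v v) = c \<cdot>\<^sub>v proj A I n' m v"
proof (rule proj_unique)
  show "c \<cdot>\<^sub>v v \<in> carrier_vec n'" using v by simp
  show "c \<cdot>\<^sub>v proj A I n' m v \<in> W" using proj(1)[OF v] subsp_W unfolding subsp_def by auto
  show "\<forall>e\<in>W. (c \<cdot>\<^sub>v proj A I n' m v) \<bullet>c e = (c \<cdot>\<^sub>v v) \<bullet>c e"
  proof
    fix e assume e: "e \<in> W"
    have ec: "e \<in> carrier_vec n'" using W_carrier[OF e] .
    have "(c \<cdot>\<^sub>v proj A I n' m v) \<bullet>c e = c * (proj A I n' m v \<bullet>c e)"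
      by (rule cip_smult_left[OF proj_carrier[OF v] ec])
    also have "\<dots> = c * (v \<bullet>c e)" using proj(2)[OF v] e by simp
    also have "\<dots> = (c \<cdot>\<^sub>v v) \<bullet>c e" by (rule cip_smult_left[OF v ec, symmetric])
    finally show "(c \<cdot>\<^sub>v proj A I n' m v) \<bullet>c e = (c \<cdot>\<^sub>v v) \<bullet>c e" .
  qed
qed

lemma PD_eq:
  assumes e: "e \<in> W"
  shows "PD A I m e = mat_adjoint I *\<^sub>v (mat_adjoint A *\<^sub>v e)"
proof -
  from e obtain x where x: "x \<in> carrier_vec m" "mat_adjoint A *\<^sub>v e = I *\<^sub>v x" unfolding PS_def by auto
  have inv: "mat_adjoint I *\<^sub>v (I *\<^sub>v y) = y" if "y \<in> carrier_vec m" for y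
  proof -
    have "mat_adjoint I *\<^sub>v (I *\<^sub>v y) = (mat_adjoint I * I) *\<^sub>v y"
      by (rule assoc_mult_mat_vec[OF IH I that, symmetric])
    also have "\<dots> = y" unfolding II using that by (rule one_mult_mat_vec)
    finally show ?thesis .
  qed
  have "PD A I m e = x"
    unfolding PD_def
  proof (rule the_equality)
    show "x \<in> carrier_vec m \<and> mat_adjoint A *\<^sub>v e = I *\<^sub>v x" using x by auto
    fix x' assume h: "x' \<in> carrier_vec m \<and> mat_adjoint A *\<^sub>v e = I *\<^sub>v x'"
    then have e1: "mat_adjoint A *\<^sub>v e = I *\<^sub>v x'" by (rule conjunct2)
    have "I *\<^sub>v x' = I *\<^sub>v x" unfolding e1[symmetric] by (rule x(2))
    then have "mat_adjoint I *\<^sub>v (I *\<^sub>v x') = mat_adjoint I *\<^sub>v (I *\<^sub>v x)" by (rule arg_cong)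
    then show "x' = x" unfolding inv[OF conjunct1[OF h]] inv[OF x(1)] .
  qed
  then show ?thesis unfolding x(2) inv[OF x(1)] .
qed

lemma ETH_eq:
  assumes x: "x \<in> carrier_vec m"
  shows "ETH A I n' m x = proj A I n' m (A *\<^sub>v (I *\<^sub>v x))"
proof -
  have Ix: "I *\<^sub>v x \<in> carrier_vec n" using I x by simp
  have "x \<bullet>c PD A I m e = (A *\<^sub>v (I *\<^sub>v x)) \<bullet>c e" if e: "e \<in> W" for e
  proof -
    have ec: "e \<in> carrier_vec n'" using W_carrier[OF e] .
    have "x \<bullet>c PD A I m e = x \<bullet>c (mat_adjoint I *\<^sub>v (mat_adjoint A *\<^sub>v e))" using PD_eq[OF e] by simp
    also have "\<dots> = (I *\<^sub>v x) \<bullet>c (mat_adjoint A *\<^sub>v e)"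
      using adj_identity[OF I x, of "mat_adjoint A *\<^sub>v e"] AH ec by simp
    also have "\<dots> = (A *\<^sub>v (I *\<^sub>v x)) \<bullet>c e"
      using adj_identity[OF A Ix ec] by simp
    finally show ?thesis .
  qed
  then have "(\<lambda>y. y \<in> W \<and> (\<forall>e \<in> W. y \<bullet>c e = x \<bullet>c PD A I m e)) =
      (\<lambda>y. y \<in> W \<and> (\<forall>e \<in> W. y \<bullet>c e = (A *\<^sub>v (I *\<^sub>v x)) \<bullet>c e))" by (auto intro!: ext)
  then show ?thesis unfolding ETH_def proj_def by simp
qed

lemma EA_eq:
  assumes e: "e \<in> W"
  shows "EA A I n' m e = mat_adjoint I *\<^sub>v (mat_adjoint A *\<^sub>v e)"
  unfolding EA_def
proof (rule the_equality)
  have ec: "e \<in> carrier_vec n'" using W_carrier[OF e] .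
  let ?z = "mat_adjoint I *\<^sub>v (mat_adjoint A *\<^sub>v e)"
  have zc: "?z \<in> carrier_vec m" using IH AH ec by auto
  have key: "?z \<bullet>c x = e \<bullet>c ETH A I n' m x" if x: "x \<in> carrier_vec m" for x
  proof -
    have Ix: "I *\<^sub>v x \<in> carrier_vec n" using I x by simp
    have AIx: "A *\<^sub>v (I *\<^sub>v x) \<in> carrier_vec n'" using A Ix by simp
    have "e \<bullet>c ETH A I n' m x = conjugate (proj A I n' m (A *\<^sub>v (I *\<^sub>v x)) \<bullet>c e)"
      using ETH_eq[OF x] cip_conj[OF proj_carrier[OF AIx] ec] by simp
    also have "\<dots> = conjugate ((A *\<^sub>v (I *\<^sub>v x)) \<bullet>c e)" using proj(2)[OF AIx] e by simp
    also have "(A *\<^sub>v (I *\<^sub>v x)) \<bullet>c e = (I *\<^sub>v x) \<bullet>c (mat_adjoint A *\<^sub>v e)"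
      using adj_identity[OF A Ix ec] .
    also have "\<dots> = x \<bullet>c ?z" using adj_identity[OF I x, of "mat_adjoint A *\<^sub>v e"] AH ec by simp
    also have "conjugate (x \<bullet>c ?z) = ?z \<bullet>c x" using cip_conj[OF x zc] by simp
    finally show ?thesis by simp
  qed
  show "?z \<in> carrier_vec m \<and> (\<forall>x\<in>carrier_vec m. ?z \<bullet>c x = e \<bullet>c ETH A I n' m x)"
    using zc key by auto
  fix z assume z: "z \<in> carrier_vec m \<and> (\<forall>x\<in>carrier_vec m. z \<bullet>c x = e \<bullet>c ETH A I n' m x)"
  define d where "d = z - ?z"
  have dc: "d \<in> carrier_vec m" unfolding d_def using z zc by auto
  have "d \<bullet>c d = 0" unfolding d_def using cip_minus_left[of z m ?z d] z zc dc key[OF dc] unfolding d_def by simp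
  then have d0: "d = 0\<^sub>v m" using cip_self_zero[OF dc] by simp
  show "z = ?z"
  proof (rule eq_vecI)
    fix i assume i: "i < dim_vec ?z"
    have "d $ i = 0" using d0 i zc by (simp add: carrier_matD[OF I])
    then show "z $ i = ?z $ i" unfolding d_def using i z zc by simp
  qed (use z zc in \<open>simp add: carrier_matD[OF I]\<close>)
qed

lemma LAP_eq:
  "LAP A I n' m = mat m m (\<lambda>(i, j). (mat_adjoint I *\<^sub>v (mat_adjoint A *\<^sub>v
       proj A I n' m (A *\<^sub>v (I *\<^sub>v unit_vec m j)))) $ i)"
proof -
  have "EA A I n' m (ETH A I n' m (unit_vec m j)) = mat_adjoint I *\<^sub>v (mat_adjoint A *\<^sub>v
       proj A I n' m (A *\<^sub>v (I *\<^sub>v unit_vec m j)))" if "j < m" for j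
  proof -
    have u: "unit_vec m j \<in> carrier_vec m" by simp
    have c: "A *\<^sub>v (I *\<^sub>v unit_vec m j) \<in> carrier_vec n'" using A I by simp
    show ?thesis using ETH_eq[OF u] EA_eq[OF proj(1)[OF c]] by simp
  qed
  then show ?thesis unfolding LAP_def by (intro eq_matI) auto
qed

end




lemma LAP_transport:
  fixes A1 :: "'a::conjugatable_ordered_field mat"
  assumes A1: "A1 \<in> carrier_mat n' n" and I: "I \<in> carrier_mat n m" and II: "mat_adjoint I * I = 1\<^sub>m m"
    and t: "sgnf n' t" and s: "sgnf n s" and r: "sgnf m r"
    and SI: "Dm n s * I = I * Dm m r"
  shows "LAP (Dm n' t * A1 * Dm n s) I n' m = Dm m r * LAP A1 I n' m * Dm m r"
proof -
  let ?T = "Dm n' t" and ?S = "Dm n s" and ?R = "Dm m r"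
  define A2 where "A2 = ?T * A1 * ?S"
  have T: "?T \<in> carrier_mat n' n'" and S: "?S \<in> carrier_mat n n" and R: "?R \<in> carrier_mat m m" by auto
  have TA1: "?T * A1 \<in> carrier_mat n' n" using mult_carrier_mat[OF T A1] .
  have A2: "A2 \<in> carrier_mat n' n" unfolding A2_def using TA1 S by simp
  interpret L1: lapset A1 I n' n m by unfold_locales (rule A1 I II)+
  interpret L2: lapset A2 I n' n m by unfold_locales (rule A2 I II)+
  have A1H: "mat_adjoint A1 \<in> carrier_mat n n'" using adj_carrier[OF A1] .
  have IH: "mat_adjoint I \<in> carrier_mat m n" using adj_carrier[OF I] .
  have A2v: "A2 *\<^sub>v x = ?T *\<^sub>v (A1 *\<^sub>v (?S *\<^sub>v x))" if x: "x \<in> carrier_vec n" for x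
  proof -
    have "A2 *\<^sub>v x = (?T * A1) *\<^sub>v (?S *\<^sub>v x)" unfolding A2_def by (rule assoc_mult_mat_vec[OF TA1 S x])
    also have "\<dots> = ?T *\<^sub>v (A1 *\<^sub>v (?S *\<^sub>v x))" by (rule assoc_mult_mat_vec[OF T A1 mult_mat_vec_carrier[OF S x]])
    finally show ?thesis .
  qed
  have A2H: "mat_adjoint A2 = ?S * (mat_adjoint A1 * ?T)"
    unfolding A2_def adj_mult[OF TA1 S] adj_mult[OF T A1] Dm_adj[OF s] Dm_adj[OF t] ..
  have A2Hv: "mat_adjoint A2 *\<^sub>v e = ?S *\<^sub>v (mat_adjoint A1 *\<^sub>v (?T *\<^sub>v e))" if e: "e \<in> carrier_vec n'" for e
  proof -
    have A1HT: "mat_adjoint A1 * ?T \<in> carrier_mat n n'" using A1H T by simp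
    have "mat_adjoint A2 *\<^sub>v e = ?S *\<^sub>v ((mat_adjoint A1 * ?T) *\<^sub>v e)" unfolding A2H by (rule assoc_mult_mat_vec[OF S A1HT e])
    also have "\<dots> = ?S *\<^sub>v (mat_adjoint A1 *\<^sub>v (?T *\<^sub>v e))" using assoc_mult_mat_vec[OF A1H T e] by simp
    finally show ?thesis .
  qed
  have SIv: "?S *\<^sub>v (I *\<^sub>v x) = I *\<^sub>v (?R *\<^sub>v x)" if x: "x \<in> carrier_vec m" for x
  proof -
    have "?S *\<^sub>v (I *\<^sub>v x) = (?S * I) *\<^sub>v x" by (rule assoc_mult_mat_vec[OF S I x, symmetric])
    also have "\<dots> = (I * ?R) *\<^sub>v x" unfolding SI ..
    also have "\<dots> = I *\<^sub>v (?R *\<^sub>v x)" by (rule assoc_mult_mat_vec[OF I R x])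
    finally show ?thesis .
  qed
  have IHS: "mat_adjoint I * ?S = ?R * mat_adjoint I"
  proof -
    have "mat_adjoint (?S * I) = mat_adjoint (I * ?R)" unfolding SI ..
    then show ?thesis unfolding adj_mult[OF S I] adj_mult[OF I R] Dm_adj[OF s] Dm_adj[OF r] .
  qed
  have W2: "e \<in> PS A2 I n' m \<longleftrightarrow> e \<in> carrier_vec n' \<and> ?T *\<^sub>v e \<in> PS A1 I n' m" for e
  proof
    assume e: "e \<in> PS A2 I n' m"
    then obtain x where x: "x \<in> carrier_vec m" "mat_adjoint A2 *\<^sub>v e = I *\<^sub>v x" and ec: "e \<in> carrier_vec n'"
      unfolding PS_def by auto
    have Tec: "?T *\<^sub>v e \<in> carrier_vec n'" using mult_mat_vec_carrier[OF T ec] .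
    have c1: "mat_adjoint A1 *\<^sub>v (?T *\<^sub>v e) \<in> carrier_vec n" using mult_mat_vec_carrier[OF A1H Tec] .
    have "mat_adjoint A1 *\<^sub>v (?T *\<^sub>v e) = ?S *\<^sub>v (?S *\<^sub>v (mat_adjoint A1 *\<^sub>v (?T *\<^sub>v e)))"
      using Dm_Dm_vec[OF s c1] by simp
    also have "\<dots> = ?S *\<^sub>v (I *\<^sub>v x)" using A2Hv[OF ec] x(2) by simp
    also have "\<dots> = I *\<^sub>v (?R *\<^sub>v x)" by (rule SIv[OF x(1)])
    finally have "mat_adjoint A1 *\<^sub>v (?T *\<^sub>v e) = I *\<^sub>v (?R *\<^sub>v x)" .
    moreover have "?R *\<^sub>v x \<in> carrier_vec m" using mult_mat_vec_carrier[OF R x(1)] .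
    ultimately show "e \<in> carrier_vec n' \<and> ?T *\<^sub>v e \<in> PS A1 I n' m" using ec Tec unfolding PS_def by auto
  next
    assume h: "e \<in> carrier_vec n' \<and> ?T *\<^sub>v e \<in> PS A1 I n' m"
    then have ec: "e \<in> carrier_vec n'" by simp
    from h obtain x where x: "x \<in> carrier_vec m" "mat_adjoint A1 *\<^sub>v (?T *\<^sub>v e) = I *\<^sub>v x"
      unfolding PS_def by auto
    have "mat_adjoint A2 *\<^sub>v e = I *\<^sub>v (?R *\<^sub>v x)" unfolding A2Hv[OF ec] x(2) by (rule SIv[OF x(1)])
    moreover have "?R *\<^sub>v x \<in> carrier_vec m" using mult_mat_vec_carrier[OF R x(1)] .
    ultimately show "e \<in> PS A2 I n' m" using ec unfolding PS_def by auto
  qed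
  have proj2: "proj A2 I n' m v = ?T *\<^sub>v proj A1 I n' m (?T *\<^sub>v v)" if v: "v \<in> carrier_vec n'" for v
  proof (rule L2.proj_unique[OF v])
    have Tv: "?T *\<^sub>v v \<in> carrier_vec n'" using mult_mat_vec_carrier[OF T v] .
    let ?p = "proj A1 I n' m (?T *\<^sub>v v)"
    have p: "?p \<in> PS A1 I n' m" "\<forall>e\<in>PS A1 I n' m. ?p \<bullet>c e = (?T *\<^sub>v v) \<bullet>c e" using L1.proj[OF Tv] by auto
    have pc: "?p \<in> carrier_vec n'" using L1.proj_carrier[OF Tv] .
    show "?T *\<^sub>v ?p \<in> PS A2 I n' m" unfolding W2 using mult_mat_vec_carrier[OF T pc] p(1) Dm_Dm_vec[OF t pc] by simp
    show "\<forall>e\<in>PS A2 I n' m. (?T *\<^sub>v ?p) \<bullet>c e = v \<bullet>c e"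
    proof
      fix e assume e: "e \<in> PS A2 I n' m"
      then have ec: "e \<in> carrier_vec n'" and Te: "?T *\<^sub>v e \<in> PS A1 I n' m" unfolding W2 by auto
      have "(?T *\<^sub>v ?p) \<bullet>c e = (?T *\<^sub>v ?p) \<bullet>c (?T *\<^sub>v (?T *\<^sub>v e))" using Dm_Dm_vec[OF t ec] by simp
      also have "\<dots> = ?p \<bullet>c (?T *\<^sub>v e)" using Dm_ip[OF t pc, of "?T *\<^sub>v e"] T ec by simp
      also have "\<dots> = (?T *\<^sub>v v) \<bullet>c (?T *\<^sub>v e)" using p(2) Te by simp
      also have "\<dots> = v \<bullet>c e" using Dm_ip[OF t v ec] .
      finally show "(?T *\<^sub>v ?p) \<bullet>c e = v \<bullet>c e" .
    qed
  qed
  have LAP1c: "LAP A1 I n' m \<in> carrier_mat m m" unfolding L1.LAP_eq by simp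
  show ?thesis
  proof (rule eq_matI)
    fix i j assume "i < dim_row (Dm m r * LAP A1 I n' m * Dm m r)" "j < dim_col (Dm m r * LAP A1 I n' m * Dm m r)"
    then have i: "i < m" and j: "j < m" by auto
    let ?u = "unit_vec m j"
    have u: "?u \<in> carrier_vec m" by simp
    have Ru: "?R *\<^sub>v ?u = r j \<cdot>\<^sub>v ?u" unfolding Dm_mult_vec[OF u] using j by (intro eq_vecI) auto
    have Iu: "I *\<^sub>v ?u \<in> carrier_vec n" using mult_mat_vec_carrier[OF I u] .
    define w where "w = A1 *\<^sub>v (I *\<^sub>v ?u)"
    have wc: "w \<in> carrier_vec n'" unfolding w_def using mult_mat_vec_carrier[OF A1 Iu] .
    have Twc: "?T *\<^sub>v w \<in> carrier_vec n'" using mult_mat_vec_carrier[OF T wc] .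
    have SIu: "?S *\<^sub>v (I *\<^sub>v ?u) = r j \<cdot>\<^sub>v (I *\<^sub>v ?u)"
      unfolding SIv[OF u] Ru using mult_mat_vec[OF I u] .
    have a: "A2 *\<^sub>v (I *\<^sub>v ?u) = r j \<cdot>\<^sub>v (?T *\<^sub>v w)"
      unfolding A2v[OF Iu] SIu w_def using mult_mat_vec[OF A1 Iu] mult_mat_vec[OF T, of "A1 *\<^sub>v (I *\<^sub>v ?u)"] A1 Iu
      by simp
    define p where "p = proj A1 I n' m w"
    have pc: "p \<in> carrier_vec n'" unfolding p_def using L1.proj_carrier[OF wc] .
    have b: "proj A2 I n' m (A2 *\<^sub>v (I *\<^sub>v ?u)) = r j \<cdot>\<^sub>v (?T *\<^sub>v p)"
    proof -
      have "?T *\<^sub>v (r j \<cdot>\<^sub>v (?T *\<^sub>v w)) = r j \<cdot>\<^sub>v w"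
        using mult_mat_vec[OF T Twc] Dm_Dm_vec[OF t wc] by simp
      then have "proj A2 I n' m (A2 *\<^sub>v (I *\<^sub>v ?u)) = ?T *\<^sub>v (r j \<cdot>\<^sub>v p)"
        unfolding a proj2[OF smult_carrier_vec[THEN iffD2, OF Twc]] p_def by (simp add: L1.proj_smult[OF wc])
      also have "\<dots> = r j \<cdot>\<^sub>v (?T *\<^sub>v p)" using mult_mat_vec[OF T pc] .
      finally show ?thesis .
    qed
    define z where "z = mat_adjoint A1 *\<^sub>v p"
    have zc: "z \<in> carrier_vec n" unfolding z_def using mult_mat_vec_carrier[OF A1H pc] .
    have Tpc: "?T *\<^sub>v p \<in> carrier_vec n'" using mult_mat_vec_carrier[OF T pc] .
    have c: "mat_adjoint A2 *\<^sub>v (r j \<cdot>\<^sub>v (?T *\<^sub>v p)) = r j \<cdot>\<^sub>v (?S *\<^sub>v z)"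
    proof -
      have "mat_adjoint A2 *\<^sub>v (r j \<cdot>\<^sub>v (?T *\<^sub>v p)) = ?S *\<^sub>v (mat_adjoint A1 *\<^sub>v (?T *\<^sub>v (r j \<cdot>\<^sub>v (?T *\<^sub>v p))))"
        using A2Hv Tpc by simp
      also have "?T *\<^sub>v (r j \<cdot>\<^sub>v (?T *\<^sub>v p)) = r j \<cdot>\<^sub>v p"
        using mult_mat_vec[OF T Tpc] Dm_Dm_vec[OF t pc] by simp
      also have "mat_adjoint A1 *\<^sub>v (r j \<cdot>\<^sub>v p) = r j \<cdot>\<^sub>v z" unfolding z_def using mult_mat_vec[OF A1H pc] .
      also have "?S *\<^sub>v (r j \<cdot>\<^sub>v z) = r j \<cdot>\<^sub>v (?S *\<^sub>v z)" using mult_mat_vec[OF S zc] .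
      finally show ?thesis .
    qed
    define y where "y = mat_adjoint I *\<^sub>v z"
    have yc: "y \<in> carrier_vec m" unfolding y_def using mult_mat_vec_carrier[OF IH zc] .
    have d: "mat_adjoint I *\<^sub>v (r j \<cdot>\<^sub>v (?S *\<^sub>v z)) = r j \<cdot>\<^sub>v (?R *\<^sub>v y)"
    proof -
      have Szc: "?S *\<^sub>v z \<in> carrier_vec n" using mult_mat_vec_carrier[OF S zc] .
      have "mat_adjoint I *\<^sub>v (r j \<cdot>\<^sub>v (?S *\<^sub>v z)) = r j \<cdot>\<^sub>v (mat_adjoint I *\<^sub>v (?S *\<^sub>v z))"
        using mult_mat_vec[OF IH Szc] .
      also have "mat_adjoint I *\<^sub>v (?S *\<^sub>v z) = (mat_adjoint I * ?S) *\<^sub>v z" by (rule assoc_mult_mat_vec[OF IH S zc, symmetric])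
      also have "\<dots> = (?R * mat_adjoint I) *\<^sub>v z" unfolding IHS ..
      also have "\<dots> = ?R *\<^sub>v y" unfolding y_def by (rule assoc_mult_mat_vec[OF R IH zc])
      finally show ?thesis .
    qed
    have lhs: "LAP A2 I n' m $$ (i, j) = r j * (r i * y $ i)"
      unfolding L2.LAP_eq using i j b c d yc by (simp add: Dm_mult_vec)
    have l1: "LAP A1 I n' m $$ (i, j) = y $ i"
      unfolding L1.LAP_eq y_def z_def p_def w_def using i j by simp
    have rhs: "(Dm m r * LAP A1 I n' m * Dm m r) $$ (i, j) = r i * (y $ i) * r j"
      unfolding Dm_mult_left[OF LAP1c] using i j l1 by (simp add: Dm_mult_right[of _ m m])
    show "LAP (Dm n' t * A1 * Dm n s) I n' m $$ (i, j) = (Dm m r * LAP A1 I n' m * Dm m r) $$ (i, j)"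
      using lhs rhs unfolding A2_def by (simp add: ac_simps)
  qed (auto simp: LAP_def)
qed




fun bef :: "'v list \<Rightarrow> 'v \<Rightarrow> 'v \<Rightarrow> bool" where
  "bef [] a b = False"
| "bef (x # xs) a b = ((a = x \<and> b \<in> set xs) \<or> bef xs a b)"

lemma bef_nth: "bef xs a b \<longleftrightarrow> (\<exists>i j. i < j \<and> j < length xs \<and> xs ! i = a \<and> xs ! j = b)"
proof (induction xs)
  case Nil
  then show ?case by simp
next
  case (Cons x xs)
  show ?case
  proof
    assume "bef (x # xs) a b"
    then consider "a = x" "b \<in> set xs" | "bef xs a b" by auto
    then show "\<exists>i j. i < j \<and> j < length (x # xs) \<and> (x # xs) ! i = a \<and> (x # xs) ! j = b"
    proof cases
      case 1
      then obtain j where "j < length xs" "xs ! j = b" by (auto simp: in_set_conv_nth)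
      then show ?thesis using 1 by (intro exI[of _ 0] exI[of _ "Suc j"]) auto
    next
      case 2
      then obtain i j where "i < j" "j < length xs" "xs ! i = a" "xs ! j = b" using Cons by auto
      then show ?thesis by (intro exI[of _ "Suc i"] exI[of _ "Suc j"]) auto
    qed
  next
    assume "\<exists>i j. i < j \<and> j < length (x # xs) \<and> (x # xs) ! i = a \<and> (x # xs) ! j = b"
    then obtain i j where ij: "i < j" "j < length (x # xs)" "(x # xs) ! i = a" "(x # xs) ! j = b" by blast
    then obtain j' where j': "j = Suc j'" by (cases j) auto
    show "bef (x # xs) a b"
    proof (cases i)
      case 0
      then show ?thesis using ij j' by auto
    next
      case (Suc i')
      then have "bef xs a b" using Cons ij j' by auto
      then show ?thesis by simp
    qed
  qed
qed

lemma bef_append: "bef (xs @ ys) a b \<longleftrightarrow> bef xs a b \<or> bef ys a b \<or> (a \<in> set xs \<and> b \<in> set ys)"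
  by (induction xs) auto

lemma bef_set: "bef xs a b \<Longrightarrow> a \<in> set xs \<and> b \<in> set xs"
  by (induction xs) auto

lemma bef_total: "distinct xs \<Longrightarrow> a \<in> set xs \<Longrightarrow> b \<in> set xs \<Longrightarrow> a \<noteq> b \<Longrightarrow> bef xs a b \<or> bef xs b a"
  by (induction xs) auto

lemma bef_asym: "distinct xs \<Longrightarrow> bef xs a b \<Longrightarrow> \<not> bef xs b a"
  by (induction xs) (auto dest: bef_set)

lemma perm_sign_bef: "perm_sign xs ys = (-1) ^ card {(a, b). bef xs a b \<and> bef ys b a}"
  unfolding perm_sign_def bef_nth by (rule arg_cong[where f = "\<lambda>n. (-1) ^ card n"]) auto

definition Pr :: "'v list \<Rightarrow> ('v \<times> 'v) set" where
  "Pr xs = {(a, b). bef xs a b}"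

definition eps :: "'v list \<Rightarrow> 'v \<times> 'v \<Rightarrow> int" where
  "eps ys p = (if bef ys (fst p) (snd p) then 1 else -1)"

lemma finite_Pr: "finite (Pr xs)"
proof -
  have "Pr xs \<subseteq> set xs \<times> set xs" unfolding Pr_def by (auto dest: bef_set)
  then show ?thesis by (rule finite_subset) auto
qed

lemma ps_prod:
  assumes "distinct xs" "distinct ys" "set xs = set ys"
  shows "perm_sign xs ys = (\<Prod>p\<in>Pr xs. eps ys p)"
proof -
  have "(\<Prod>p\<in>Pr xs. eps ys p) = (\<Prod>p\<in>Pr xs \<inter> {p. bef ys (fst p) (snd p)}. 1) *
      (\<Prod>p\<in>Pr xs \<inter> - {p. bef ys (fst p) (snd p)}. -1)"
    unfolding eps_def by (rule prod.If_cases[OF finite_Pr])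
  also have "\<dots> = (-1) ^ card (Pr xs \<inter> - {p. bef ys (fst p) (snd p)})" by simp
  also have "Pr xs \<inter> - {p. bef ys (fst p) (snd p)} = {(a, b). bef xs a b \<and> bef ys b a}"
  proof -
    { fix a b assume "bef xs a b" "\<not> bef ys a b"
      then have "bef ys b a" using bef_total[OF assms(2), of a b] bef_set[of xs a b] assms
        bef_asym[OF assms(1), of a b] by auto }
    moreover
    { fix a b assume "bef xs a b" "bef ys b a"
      then have "\<not> bef ys a b" using bef_asym[OF assms(2)] by auto }
    ultimately show ?thesis unfolding Pr_def by auto
  qed
  finally show ?thesis unfolding perm_sign_bef by simp
qed

lemma ps_mult:
  assumes d: "distinct xs" "distinct ys" "distinct zs" and s: "set xs = set ys" "set ys = set zs"
  shows "perm_sign xs zs = perm_sign xs ys * perm_sign ys zs"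
proof -
  define h where "h p = eps ys p * eps zs p" for p
  have e2: "eps ys p * eps ys p = 1" for p unfolding eps_def by auto
  have "perm_sign xs zs = (\<Prod>p\<in>Pr xs. eps ys p * h p)"
    unfolding ps_prod[OF d(1) d(3) s(1)[unfolded s(2)]] h_def
    by (rule prod.cong) (auto simp: mult.assoc[symmetric] e2)
  also have "\<dots> = perm_sign xs ys * (\<Prod>p\<in>Pr xs. h p)"
    unfolding ps_prod[OF d(1) d(2) s(1)] by (simp add: prod.distrib)
  also have "(\<Prod>p\<in>Pr xs. h p) = (\<Prod>p\<in>Pr ys. h p)"
  proof -
    define g where "g p = (if bef xs (fst p) (snd p) then p else (snd p, fst p))" for p
    have bij: "bij_betw g (Pr ys) (Pr xs)"
    proof (rule bij_betw_imageI)
      show "inj_on g (Pr ys)"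
      proof
        fix p1 p2 assume p: "p1 \<in> Pr ys" "p2 \<in> Pr ys" "g p1 = g p2"
        obtain a b c d where ab: "p1 = (a, b)" "p2 = (c, d)" by fastforce
        have "bef ys a b" "bef ys c d" using p ab unfolding Pr_def by auto
        then show "p1 = p2" using p(3) ab bef_asym[OF assms(2)] unfolding g_def
          by (auto split: if_splits)
      qed
      show "g ` Pr ys = Pr xs"
      proof
        show "g ` Pr ys \<subseteq> Pr xs"
        proof
          fix p assume "p \<in> g ` Pr ys"
          then obtain a b where ab: "bef ys a b" "p = g (a, b)" unfolding Pr_def by auto
          have "a \<noteq> b" using ab bef_asym[OF assms(2)] by auto
          moreover have "a \<in> set xs" "b \<in> set xs" using bef_set[OF ab(1)] s by auto
          ultimately show "p \<in> Pr xs" using ab bef_total[OF assms(1), of a b] unfolding g_def Pr_def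
            by auto
        qed
        show "Pr xs \<subseteq> g ` Pr ys"
        proof
          fix p assume "p \<in> Pr xs"
          then obtain a b where ab: "bef xs a b" "p = (a, b)" unfolding Pr_def by auto
          have "a \<noteq> b" using ab bef_asym[OF assms(1)] by auto
          moreover have "a \<in> set ys" "b \<in> set ys" using bef_set[OF ab(1)] s by auto
          ultimately have "bef ys a b \<or> bef ys b a" using bef_total[OF assms(2)] by auto
          then show "p \<in> g ` Pr ys"
          proof
            assume "bef ys a b"
            then show ?thesis using ab unfolding g_def Pr_def by (auto intro!: image_eqI[of _ _ "(a,b)"])
          next
            assume "bef ys b a"
            moreover have "\<not> bef xs b a" using ab bef_asym[OF assms(1)] by auto
            ultimately show ?thesis using ab unfolding g_def Pr_def by (auto intro!: image_eqI[of _ _ "(b,a)"])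
          qed
        qed
      qed
    qed
    have hg: "h (g p) = h p" if "p \<in> Pr ys" for p
    proof -
      obtain a b where ab: "p = (a, b)" by fastforce
      have "a \<noteq> b" using that ab bef_asym[OF assms(2)] unfolding Pr_def by auto
      moreover have "a \<in> set zs" "b \<in> set zs" "a \<in> set ys" "b \<in> set ys"
        using that ab bef_set[of ys a b] s unfolding Pr_def by auto
      ultimately show ?thesis
        using ab bef_total[OF assms(3), of a b] bef_asym[OF assms(3), of a b]
          bef_total[OF assms(2), of a b] bef_asym[OF assms(2), of a b]
          bef_asym[OF assms(3), of b a] bef_asym[OF assms(2), of b a]
        unfolding g_def h_def eps_def by auto
    qed
    have "(\<Prod>p\<in>Pr xs. h p) = (\<Prod>p\<in>Pr ys. h (g p))"
      using prod.reindex_bij_betw[OF bij, of h] by simp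
    also have "\<dots> = (\<Prod>p\<in>Pr ys. h p)" by (rule prod.cong) (auto simp: hg)
    finally show ?thesis .
  qed
  also have "(\<Prod>p\<in>Pr ys. h p) = perm_sign ys zs"
    unfolding ps_prod[OF d(2) d(3) s(2)] h_def
    by (rule prod.cong) (auto simp: eps_def Pr_def)
  finally show ?thesis .
qed

lemma ps_sq: "perm_sign xs ys * perm_sign xs ys = 1"
  unfolding perm_sign_def by (simp add: power_mult_distrib[symmetric])

lemma ps_refl: assumes "distinct xs" shows "perm_sign xs xs = 1"
proof -
  have e: "{(a, b). bef xs a b \<and> bef xs b a} = {}" using bef_asym[OF assms] by auto
  show ?thesis unfolding perm_sign_bef e by simp
qed

lemma ps_sym:
  assumes "distinct xs" "distinct ys" "set xs = set ys"
  shows "perm_sign xs ys = perm_sign ys xs"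
proof -
  have "1 = perm_sign xs ys * perm_sign ys xs"
    using ps_mult[OF assms(1,2,1) assms(3) assms(3)[symmetric]] ps_refl[OF assms(1)] by simp
  then have "perm_sign xs ys * 1 = perm_sign xs ys * (perm_sign xs ys * perm_sign ys xs)" by simp
  then show ?thesis by (simp add: mult.assoc[symmetric] ps_sq)
qed

lemma ps_cons:
  assumes "v \<notin> set xs" "v \<notin> set ys"
  shows "perm_sign (v # xs) (v # ys) = perm_sign xs ys"
  unfolding perm_sign_bef using assms
  by (intro arg_cong[where f = "\<lambda>n. (-1) ^ card n"]) (auto dest: bef_set)

lemma ps_split:
  assumes t: "distinct (l1 @ v # l2)" and xs: "distinct xs" "set xs = set l1 \<union> set l2"
  shows "perm_sign (v # xs) (l1 @ v # l2) = (-1) ^ length l1 * perm_sign xs (l1 @ l2)"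
proof -
  let ?t = "l1 @ v # l2"
  have vx: "v \<notin> set xs" using t xs by auto
  have Pr_cons: "Pr (v # xs) = Pair v ` set xs \<union> Pr xs" unfolding Pr_def by auto
  have disj: "Pair v ` set xs \<inter> Pr xs = {}" using vx unfolding Pr_def by (auto dest: bef_set)
  have "perm_sign (v # xs) ?t = (\<Prod>p\<in>Pr (v # xs). eps ?t p)"
    by (rule ps_prod) (use t xs vx in auto)
  also have "\<dots> = (\<Prod>p\<in>Pair v ` set xs. eps ?t p) * (\<Prod>p\<in>Pr xs. eps ?t p)"
    unfolding Pr_cons by (rule prod.union_disjoint) (auto simp: finite_Pr disj)
  also have "(\<Prod>p\<in>Pair v ` set xs. eps ?t p) = (\<Prod>b\<in>set xs. eps ?t (v, b))"
    by (subst prod.reindex) (auto simp: inj_on_def)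
  also have "\<dots> = (\<Prod>b\<in>set l1 \<union> set l2. (if b \<in> set l2 then 1 else -1))"
    unfolding xs(2) using t by (intro prod.cong) (auto simp: eps_def bef_append dest: bef_set)
  also have "\<dots> = (\<Prod>b\<in>set l1. (if b \<in> set l2 then 1 else -1)) * (\<Prod>b\<in>set l2. (if b \<in> set l2 then 1 else -1))"
    using t by (intro prod.union_disjoint) auto
  also have "(\<Prod>b\<in>set l1. (if b \<in> set l2 then 1 else -1)) = (\<Prod>b\<in>set l1. (-1::int))"
    using t by (intro prod.cong) auto
  also have "(\<Prod>b\<in>set l2. (if b \<in> set l2 then 1 else -1)) = (\<Prod>b\<in>set l2. (1::int))"
    by (intro prod.cong) auto
  also have "(\<Prod>b\<in>set l1. (-1::int)) * (\<Prod>b\<in>set l2. (1::int)) = (-1) ^ length l1"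
    using t by (simp add: distinct_card)
  also have "(\<Prod>p\<in>Pr xs. eps ?t p) = (\<Prod>p\<in>Pr xs. eps (l1 @ l2) p)"
  proof (rule prod.cong[OF refl])
    fix p assume "p \<in> Pr xs"
    then obtain a b where ab: "p = (a, b)" "bef xs a b" unfolding Pr_def by auto
    have "a \<noteq> v" "b \<noteq> v" using bef_set[OF ab(2)] vx by auto
    then show "eps ?t p = eps (l1 @ l2) p" unfolding eps_def ab(1) by (auto simp: bef_append)
  qed
  also have "\<dots> = perm_sign xs (l1 @ l2)"
    by (rule ps_prod[symmetric]) (use t xs in auto)
  finally show ?thesis .
qed

lemma incidence_ps:
  assumes ori: "orientation L ori" and st: "\<sigma> \<in> L" "\<tau> \<in> L" "\<sigma> \<subseteq> \<tau>" "card \<tau> = Suc (card \<sigma>)"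
  shows "\<exists>v. v \<notin> \<sigma> \<and> \<tau> = insert v \<sigma> \<and> incidence ori \<sigma> \<tau> = perm_sign (v # ori \<sigma>) (ori \<tau>)"
proof -
  have fin: "finite \<tau>" using st(4) card.infinite by fastforce
  have fs: "finite \<sigma>" using finite_subset[OF st(3) fin] .
  have "card (\<tau> - \<sigma>) = 1" using st(3,4) fs by (simp add: card_Diff_subset)
  then obtain v where v: "\<tau> - \<sigma> = {v}" by (rule card_1_singletonE)
  have dt: "distinct (ori \<tau>)" "set (ori \<tau>) = \<tau>" and ds: "distinct (ori \<sigma>)" "set (ori \<sigma>) = \<sigma>"
    using ori st unfolding orientation_def by auto
  have vt: "v \<in> set (ori \<tau>)" using v dt by auto
  obtain l1 l2 where split: "ori \<tau> = l1 @ v # l2" "v \<notin> set l1"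
    using split_list_first[OF vt] by blast
  have tw: "takeWhile (\<lambda>x. x \<noteq> v) (ori \<tau>) = l1"
    unfolding split(1) using split(2) by (subst takeWhile_append2) auto
  have rm: "remove1 v (ori \<tau>) = l1 @ l2" unfolding split(1) using split(2) by (simp add: remove1_append)
  have sig: "\<sigma> = set l1 \<union> set l2" using v dt split st(3) by auto
  have inc: "incidence ori \<sigma> \<tau> = (-1) ^ length l1 * perm_sign (ori \<sigma>) (l1 @ l2)"
    unfolding incidence_def using st v tw rm by (simp add: Let_def)
  have "v \<notin> \<sigma>" "\<tau> = insert v \<sigma>" using v st(3) by auto
  moreover have "incidence ori \<sigma> \<tau> = perm_sign (v # ori \<sigma>) (ori \<tau>)"
    using ps_split[of l1 v l2 "ori \<sigma>"] dt(1) ds sig split inc by auto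
  ultimately show ?thesis by blast
qed

lemma incidence_change:
  assumes o1: "orientation L or1" and o2: "orientation L or2" and st: "\<sigma> \<in> L" "\<tau> \<in> L"
  shows "incidence or2 \<sigma> \<tau> = perm_sign (or1 \<sigma>) (or2 \<sigma>) * perm_sign (or1 \<tau>) (or2 \<tau>) * incidence or1 \<sigma> \<tau>"
proof (cases "\<sigma> \<subseteq> \<tau> \<and> card \<tau> = Suc (card \<sigma>)")
  case False
  then have "incidence or2 \<sigma> \<tau> = 0" "incidence or1 \<sigma> \<tau> = 0" unfolding incidence_def by auto
  then show ?thesis by simp
next
  case True
  obtain v where v: "v \<notin> \<sigma>" "\<tau> = insert v \<sigma>" and i1: "incidence or1 \<sigma> \<tau> = perm_sign (v # or1 \<sigma>) (or1 \<tau>)"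
    using incidence_ps[OF o1 st] True by blast
  obtain w where w: "w \<notin> \<sigma>" "\<tau> = insert w \<sigma>" and i2: "incidence or2 \<sigma> \<tau> = perm_sign (w # or2 \<sigma>) (or2 \<tau>)"
    using incidence_ps[OF o2 st] True by blast
  have vw: "w = v" using v w by auto
  have d: "distinct (or1 \<sigma>)" "set (or1 \<sigma>) = \<sigma>" "distinct (or2 \<sigma>)" "set (or2 \<sigma>) = \<sigma>"
    "distinct (or1 \<tau>)" "set (or1 \<tau>) = \<tau>" "distinct (or2 \<tau>)" "set (or2 \<tau>) = \<tau>"
    using o1 o2 st unfolding orientation_def by auto
  have "perm_sign (v # or2 \<sigma>) (or2 \<tau>) = perm_sign (v # or2 \<sigma>) (v # or1 \<sigma>) * perm_sign (v # or1 \<sigma>) (or2 \<tau>)"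
    by (rule ps_mult) (use d v in auto)
  also have "perm_sign (v # or1 \<sigma>) (or2 \<tau>) = perm_sign (v # or1 \<sigma>) (or1 \<tau>) * perm_sign (or1 \<tau>) (or2 \<tau>)"
    by (rule ps_mult) (use d v in auto)
  also have "perm_sign (v # or2 \<sigma>) (v # or1 \<sigma>) = perm_sign (or1 \<sigma>) (or2 \<sigma>)"
    using ps_cons[of v "or2 \<sigma>" "or1 \<sigma>"] ps_sym[of "or2 \<sigma>" "or1 \<sigma>"] d v by auto
  finally show ?thesis using i1 i2 vw by simp
qed



lemma finite_cells: "finite X \<Longrightarrow> finite (cells X q)"
  unfolding cells_def by simp

lemma cell_list: "finite X \<Longrightarrow> distinct (cell_list X q) \<and> set (cell_list X q) = cells X q"
proof -
  assume "finite X"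
  then obtain xs where "distinct xs" "set xs = cells X q" using finite_distinct_list[OF finite_cells] by metis
  then show ?thesis unfolding cell_list_def by (intro someI_ex[where P = "\<lambda>xs. distinct xs \<and> set xs = cells X q"]) auto
qed

lemma concat_coords:
  "distinct xs \<Longrightarrow> distinct (concat (map (\<lambda>\<sigma>. map (Pair \<sigma>) [0..<sdim \<sigma>]) xs)) \<and>
     set (concat (map (\<lambda>\<sigma>. map (Pair \<sigma>) [0..<sdim \<sigma>]) xs)) = {(\<sigma>, i). \<sigma> \<in> set xs \<and> i < sdim \<sigma>}"
proof (induction xs)
  case Nil
  then show ?case by simp
next
  case (Cons x xs)
  then show ?case by (auto simp: distinct_map inj_on_def)
qed

lemma coords_props:
  assumes "finite X"
  shows "distinct (coords sdim X q)" "set (coords sdim X q) = {(\<sigma>, i). \<sigma> \<in> cells X q \<and> i < sdim \<sigma>}"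
  using concat_coords[of "cell_list X q" sdim] cell_list[OF assms, of q] unfolding coords_def by auto

lemma coords_nth:
  assumes "finite X" "r < cdim sdim X q" "coords sdim X q ! r = (\<sigma>, i)"
  shows "\<sigma> \<in> cells X q" "i < sdim \<sigma>"
proof -
  have "(\<sigma>, i) \<in> set (coords sdim X q)" using assms(2,3) nth_mem[of r "coords sdim X q"] unfolding cdim_def by auto
  then show "\<sigma> \<in> cells X q" "i < sdim \<sigma>" using coords_props(2)[OF assms(1)] by auto
qed

lemma conj_of_int[simp]: "conjugate (of_int k :: 'a :: conjugatable_field) = of_int k"
proof (induction k rule: int_induct[where k = 0])
  case base
  then show ?case by simp
next
  case (step1 i)
  then show ?case by (simp add: conjugate_dist_add)
next
  case (step2 i)
  have "conjugate (of_int (i - 1) :: 'a) = conjugate (of_int i + - 1)" by simp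
  also have "\<dots> = of_int i + - 1" using step2 by (simp only: conjugate_dist_add conjugate_neg conjugate_one_cf)
  finally show ?case by simp
qed

definition sv :: "('v set \<Rightarrow> 'v list) \<Rightarrow> ('v set \<Rightarrow> 'v list) \<Rightarrow> ('v set \<Rightarrow> nat) \<Rightarrow> 'v set set \<Rightarrow> nat \<Rightarrow> nat \<Rightarrow> 'a :: conjugatable_field" where
  "sv or1 or2 sdim X q i = of_int (perm_sign (or1 (fst (coords sdim X q ! i))) (or2 (fst (coords sdim X q ! i))))"

lemma sgnf_sv: "sgnf n (sv or1 or2 sdim X q)"
  unfolding sgnf_def sv_def
  by (auto simp: of_int_mult[symmetric] ps_sq simp del: of_int_mult)

lemma cob_carrier: "coboundary ori sdim res X q \<in> carrier_mat (cdim sdim X (Suc q)) (cdim sdim X q)"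
  unfolding coboundary_def by simp

lemma cob_change:
  assumes fin: "finite X" and XL: "X \<subseteq> L" and o1: "orientation L or1" and o2: "orientation L or2"
  shows "coboundary or2 sdim res X q = Dm (cdim sdim X (Suc q)) (sv or1 or2 sdim X (Suc q)) *
     coboundary or1 sdim res X q * Dm (cdim sdim X q) (sv or1 or2 sdim X q)"
proof -
  let ?n1 = "cdim sdim X (Suc q)" and ?n0 = "cdim sdim X q"
  let ?A1 = "coboundary or1 sdim res X q"
  let ?t = "sv or1 or2 sdim X (Suc q)" and ?s = "sv or1 or2 sdim X q"
  have m1: "mat ?n1 ?n0 (\<lambda>(i, j). ?t i * ?A1 $$ (i, j)) \<in> carrier_mat ?n1 ?n0" by simp
  show ?thesis
    unfolding Dm_mult_left[OF cob_carrier] Dm_mult_right[OF m1]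
  proof (rule eq_matI)
    fix r c assume "r < dim_row (mat ?n1 ?n0 (\<lambda>(i, j). mat ?n1 ?n0 (\<lambda>(i, j). ?t i * ?A1 $$ (i, j)) $$ (i, j) * ?s j))"
      "c < dim_col (mat ?n1 ?n0 (\<lambda>(i, j). mat ?n1 ?n0 (\<lambda>(i, j). ?t i * ?A1 $$ (i, j)) $$ (i, j) * ?s j))"
    then have r: "r < ?n1" and c: "c < ?n0" by auto
    obtain \<tau> i where ti: "coords sdim X (Suc q) ! r = (\<tau>, i)" by fastforce
    obtain \<sigma> j where sj: "coords sdim X q ! c = (\<sigma>, j)" by fastforce
    have "\<tau> \<in> L" "\<sigma> \<in> L" using coords_nth[OF fin r ti] coords_nth[OF fin c sj] XL unfolding cells_def by auto
    note ic = incidence_change[OF o1 o2 \<open>\<sigma> \<in> L\<close> \<open>\<tau> \<in> L\<close>]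
    show "coboundary or2 sdim res X q $$ (r, c) =
      mat ?n1 ?n0 (\<lambda>(i, j). mat ?n1 ?n0 (\<lambda>(i, j). ?t i * ?A1 $$ (i, j)) $$ (i, j) * ?s j) $$ (r, c)"
      using r c unfolding coboundary_def sv_def by (simp add: ti sj ic algebra_simps)
  qed (simp_all add: coboundary_def)
qed




lemma incl_carrier: "inclusion sdim K L q \<in> carrier_mat (cdim sdim L q) (cdim sdim K q)"
  unfolding inclusion_def by simp

lemma coordsK_in_L:
  assumes fK: "finite K" and fL: "finite L" and KL: "K \<subseteq> L"
  shows "set (coords sdim K q) \<subseteq> set (coords sdim L q)"
  using coords_props(2)[OF fK] coords_props(2)[OF fL] KL unfolding cells_def by auto

lemma incl_orth:
  assumes fK: "finite K" and fL: "finite L" and KL: "K \<subseteq> L"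
  shows "mat_adjoint (inclusion sdim K L q :: 'a :: conjugatable_field mat) * inclusion sdim K L q = 1\<^sub>m (cdim sdim K q)"
proof -
  let ?I = "inclusion sdim K L q :: 'a mat" and ?nL = "cdim sdim L q" and ?nK = "cdim sdim K q"
  let ?cL = "coords sdim L q" and ?cK = "coords sdim K q"
  have Ic: "?I \<in> carrier_mat ?nL ?nK" by (rule incl_carrier)
  have IH: "mat_adjoint ?I \<in> carrier_mat ?nK ?nL" by (rule adj_carrier[OF Ic])
  show ?thesis
  proof (rule eq_matI)
    fix a b assume "a < dim_row (1\<^sub>m ?nK :: 'a mat)" "b < dim_col (1\<^sub>m ?nK :: 'a mat)"
    then have a: "a < ?nK" and b: "b < ?nK" by auto
    have "?cK ! a \<in> set ?cK" using a unfolding cdim_def by simp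
    then have "?cK ! a \<in> set ?cL" using coordsK_in_L[OF fK fL KL, of sdim q] by blast
    then obtain r0 where r0: "r0 < ?nL" "?cL ! r0 = ?cK ! a" unfolding cdim_def by (auto simp: in_set_conv_nth)
    have eq: "(?cL ! r = ?cK ! a) \<longleftrightarrow> r0 = r" if "r < ?nL" for r
      using r0 that coords_props(1)[OF fL] nth_eq_iff_index_eq[of ?cL r r0] unfolding cdim_def by auto
    have eqK: "(?cK ! a = ?cK ! b) \<longleftrightarrow> a = b"
      using a b coords_props(1)[OF fK] nth_eq_iff_index_eq unfolding cdim_def by blast
    have "(mat_adjoint ?I * ?I) $$ (a, b) = (\<Sum>r\<in>{0..<?nL}. conjugate (?I $$ (r, a)) * ?I $$ (r, b))"
      using a b by (simp add: scalar_prod_def inclusion_def)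
    also have "\<dots> = (\<Sum>r\<in>{0..<?nL}. if r0 = r then (if a = b then 1 else 0) else 0)"
    proof (rule sum.cong[OF refl])
      fix r assume "r \<in> {0..<?nL}"
      then have r: "r < ?nL" by simp
      show "conjugate (?I $$ (r, a)) * ?I $$ (r, b) = (if r0 = r then (if a = b then 1 else 0) else 0)"
        using r a b eq[OF r] eqK unfolding inclusion_def by (auto simp: conjugate_one_cf)
    qed
    also have "\<dots> = (if a = b then 1 else 0)" using r0 by (simp add: sum.delta)
    also have "\<dots> = (1\<^sub>m ?nK :: 'a mat) $$ (a, b)" using a b by simp
    finally show "(mat_adjoint ?I * ?I) $$ (a, b) = (1\<^sub>m ?nK :: 'a mat) $$ (a, b)" .
  qed (use Ic IH in auto)
qed

lemma incl_comm:
  "Dm (cdim sdim L q) (sv or1 or2 sdim L q) * inclusion sdim K L q =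
   inclusion sdim K L q * Dm (cdim sdim K q) (sv or1 or2 sdim K q)"
  unfolding Dm_mult_left[OF incl_carrier] Dm_mult_right[OF incl_carrier]
  by (intro eq_matI) (auto simp: inclusion_def sv_def)

lemma down_change:
  fixes res :: "'v set \<Rightarrow> 'v set \<Rightarrow> 'a :: conjugatable_ordered_field mat"
  assumes fin: "finite K" and KL: "K \<subseteq> L" and o1: "orientation L or1" and o2: "orientation L or2"
  shows "down_laplacian or2 sdim res K q =
    Dm (cdim sdim K q) (sv or1 or2 sdim K q) * down_laplacian or1 sdim res K q * Dm (cdim sdim K q) (sv or1 or2 sdim K q)"
proof (cases "q = 0")
  case True
  let ?R = "Dm (cdim sdim K q) (sv or1 or2 sdim K q) :: 'a mat"
  have "?R * 0\<^sub>m (cdim sdim K 0) (cdim sdim K 0) * ?R = 0\<^sub>m (cdim sdim K 0) (cdim sdim K 0)"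
    using True by simp
  then show ?thesis using True unfolding down_laplacian_def by simp
next
  case False
  then obtain p where p: "q = Suc p" by (cases q) auto
  let ?R = "Dm (cdim sdim K q) (sv or1 or2 sdim K q) :: 'a mat"
  let ?U = "Dm (cdim sdim K p) (sv or1 or2 sdim K p) :: 'a mat"
  let ?B1 = "coboundary or1 sdim res K p"
  let ?nq = "cdim sdim K q" and ?np = "cdim sdim K p"
  have B1: "?B1 \<in> carrier_mat ?nq ?np" using cob_carrier[of or1 sdim res K p] p by simp
  have B1H: "mat_adjoint ?B1 \<in> carrier_mat ?np ?nq" using adj_carrier[OF B1] .
  have R: "?R \<in> carrier_mat ?nq ?nq" and U: "?U \<in> carrier_mat ?np ?np" by auto
  have B2: "coboundary or2 sdim res K p = ?R * ?B1 * ?U"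
    using cob_change[OF fin KL o1 o2, of sdim res p] p by simp
  have RB1: "?R * ?B1 \<in> carrier_mat ?nq ?np" using mult_carrier_mat[OF R B1] .
  have B1HR: "mat_adjoint ?B1 * ?R \<in> carrier_mat ?np ?nq" using mult_carrier_mat[OF B1H R] .
  have adjB2: "mat_adjoint (?R * ?B1 * ?U) = ?U * (mat_adjoint ?B1 * ?R)"
    unfolding adj_mult[OF RB1 U] adj_mult[OF R B1] Dm_adj[OF sgnf_sv] ..
  have UU: "?U * (?U * (mat_adjoint ?B1 * ?R)) = mat_adjoint ?B1 * ?R"
  proof -
    have "?U * (?U * (mat_adjoint ?B1 * ?R)) = (?U * ?U) * (mat_adjoint ?B1 * ?R)"
      by (rule assoc_mult_mat[OF U U B1HR, symmetric])
    also have "\<dots> = 1\<^sub>m ?np * (mat_adjoint ?B1 * ?R)" by (simp only: Dm_sq[OF sgnf_sv])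
    also have "\<dots> = mat_adjoint ?B1 * ?R" by (rule left_mult_one_mat[OF B1HR])
    finally show ?thesis .
  qed
  have "(?R * ?B1 * ?U) * (?U * (mat_adjoint ?B1 * ?R)) = (?R * ?B1) * (?U * (?U * (mat_adjoint ?B1 * ?R)))"
    using assoc_mult_mat[OF RB1 U mult_carrier_mat[OF U B1HR]] .
  also have "\<dots> = (?R * ?B1) * (mat_adjoint ?B1 * ?R)" unfolding UU ..
  also have "\<dots> = ?R * (?B1 * (mat_adjoint ?B1 * ?R))" using assoc_mult_mat[OF R B1 B1HR] .
  also have "?B1 * (mat_adjoint ?B1 * ?R) = (?B1 * mat_adjoint ?B1) * ?R" using assoc_mult_mat[OF B1 B1H R, symmetric] .
  also have "?R * ((?B1 * mat_adjoint ?B1) * ?R) = (?R * (?B1 * mat_adjoint ?B1)) * ?R"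
    using assoc_mult_mat[OF R mult_carrier_mat[OF B1 B1H] R, symmetric] .
  finally have "(?R * ?B1 * ?U) * mat_adjoint (?R * ?B1 * ?U) = ?R * (?B1 * mat_adjoint ?B1) * ?R"
    unfolding adjB2 .
  then show ?thesis unfolding down_laplacian_def using False p B2 by simp
qed

lemma down_carrier:
  "down_laplacian ori sdim res K q \<in> carrier_mat (cdim sdim K q) (cdim sdim K q)"
proof (cases q)
  case 0
  then show ?thesis unfolding down_laplacian_def by simp
next
  case (Suc p)
  have B: "coboundary ori sdim res K p \<in> carrier_mat (cdim sdim K q) (cdim sdim K p)"
    using cob_carrier[of ori sdim res K p] Suc by simp
  show ?thesis unfolding down_laplacian_def using Suc mult_carrier_mat[OF B adj_carrier[OF B]] by simp
qed

theorem mainTheorem4: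
  fixes K L :: "'v set set"
    and sdim :: "'v set \<Rightarrow> nat"
    and res :: "'v set \<Rightarrow> 'v set \<Rightarrow> 'a :: conjugatable_ordered_field mat"
    and or1 or2 :: "'v set \<Rightarrow> 'v list"
    and q :: nat
  assumes "simplicial_complex K" and "simplicial_complex L" and "K \<subseteq> L"
    and "cellular_sheaf L sdim res"
    and "orientation L or1" and "orientation L or2"
  shows "spectrum_mset (pers_laplacian or1 sdim res K L q)
       = spectrum_mset (pers_laplacian or2 sdim res K L q)"
proof -
  have fK: "finite K" and fL: "finite L" using assms(1,2) unfolding simplicial_complex_def by auto
  note KL = assms(3) and o1 = assms(5) and o2 = assms(6)
  let ?n' = "cdim sdim L (Suc q)" and ?n = "cdim sdim L q" and ?m = "cdim sdim K q"
  let ?I = "inclusion sdim K L q"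
  let ?A1 = "coboundary or1 sdim res L q"
  let ?R = "Dm ?m (sv or1 or2 sdim K q) :: 'a mat"
  let ?X = "LAP ?A1 ?I ?n' ?m" and ?Y = "down_laplacian or1 sdim res K q"
  have R: "?R \<in> carrier_mat ?m ?m" by simp
  have X: "?X \<in> carrier_mat ?m ?m" unfolding LAP_def by simp
  have Y: "?Y \<in> carrier_mat ?m ?m" by (rule down_carrier)
  have lap2: "LAP (coboundary or2 sdim res L q) ?I ?n' ?m = ?R * ?X * ?R"
    unfolding cob_change[OF fL subset_refl o1 o2, of sdim res q]
    by (rule LAP_transport[OF cob_carrier incl_carrier incl_orth[OF fK fL KL] sgnf_sv sgnf_sv sgnf_sv incl_comm])
  have P1: "pers_laplacian or1 sdim res K L q = ?X + ?Y" by (rule pers_lap_LAP)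
  have "pers_laplacian or2 sdim res K L q = ?R * ?X * ?R + ?R * ?Y * ?R"
    unfolding pers_lap_LAP lap2 down_change[OF fK KL o1 o2] ..
  also have "\<dots> = ?R * (?X + ?Y) * ?R"
    using mult_add_distrib_mat[OF R X Y] add_mult_distrib_mat[OF mult_carrier_mat[OF R X] mult_carrier_mat[OF R Y] R]
    by simp
  finally have P2: "pers_laplacian or2 sdim res K L q = ?R * pers_laplacian or1 sdim res K L q * ?R"
    unfolding P1 .
  have "similar_mat (pers_laplacian or2 sdim res K L q) (pers_laplacian or1 sdim res K L q)"
  proof (rule similar_matI[of _ _ ?R ?R ?m])
    show "{pers_laplacian or2 sdim res K L q, pers_laplacian or1 sdim res K L q, ?R, ?R} \<subseteq> carrier_mat ?m ?m"
      using P1 P2 R X Y by auto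
    show "?R * ?R = 1\<^sub>m ?m" by (rule Dm_sq[OF sgnf_sv])
    show "?R * ?R = 1\<^sub>m ?m" by (rule Dm_sq[OF sgnf_sv])
    show "pers_laplacian or2 sdim res K L q = ?R * pers_laplacian or1 sdim res K L q * ?R" by (rule P2)
  qed
  then show ?thesis unfolding spectrum_mset_def using char_poly_similar by metis
qed


end
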